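(* Let $d\geq2$ and let $\mathcal{D}\subset\mathbb{R}^d$ be bounded and convex, containing the cube $[0,\epsilon)^d$ for some $\epsilon>0$. Let $\alpha=(\alpha_1,\ldots,\alpha_d)\in\mathbb{R}^d$ satisfy \[\liminf_{n\to\infty} n\,\|n\alpha_1\|_{\mathbb{R}/\mathbb{Z}}\cdots\|n\alpha_d\|_{\mathbb{R}/\mathbb{Z}}>0 .\] Then there is a constant $\Theta<\infty$ such that \[\max_{k\in\mathcal{D}_T\cap\mathbb{Z}^d} F\left(\begin{pmatrix}1_d & {}^t\alpha\\ 0 & 1\end{pmatrix}\begin{pmatrix}T^{-1} & {}^t0\\ 0 & \det T\end{pmatrix},\ kT^{-1}\right)\leq\Theta\] for all $T=\operatorname{diag}(T_1,\ldots,T_d)$ with $T_1,\ldots,T_d\geq1$.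
   Context: Vectors are row vectors; ${}^t\alpha$ is the column vector transpose of $\alpha$, $1_d$ the $d\times d$ identity. For $M\in\operatorname{SL}(d+1,\mathbb{R})$ and $t\in\mathbb{R}^d$, $F(M,t)=\min\{y>0\mid (x,y)\in\mathbb{Z}^{d+1}M,\ x+t\in\mathcal{D}\}$ ($x\in\mathbb{R}^d$, $y\in\mathbb{R}$), where $\mathbb{Z}^{d+1}M$ is the lattice spanned by the rows of $M$, and $F(M,t)=\infty$ if no minimum exists. $\mathcal{D}_T=\{xT\mid x\in\mathcal{D}\}$. $\|x\|_{\mathbb{R}/\mathbb{Z}}$ is the distance from $x$ to the nearest integer. *)

theory Defs
  imports "HOL-Analysis.Analysis" "HOL-Library.Extended_Real"
begin

definition dZ :: "real \<Rightarrow> real" where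
  "dZ x = infdist x (\<int> :: real set)"

definition row_lattice :: "real^'n^'n \<Rightarrow> (real^'n) set" where
  "row_lattice M = {v v* M | v. \<forall>i. v $ i \<in> \<int>}"

text \<open>Index type 'd option for R^(d+1): Some i is the i-th x-coordinate, None is the y-coordinate.\<close>
definition xpart :: "real^('d::finite option) \<Rightarrow> real^'d" where
  "xpart w = (\<chi> i. w $ Some i)"

definition ypart :: "real^('d::finite option) \<Rightarrow> real" where
  "ypart w = w $ None"

definition block :: "real^'d::finite^'d \<Rightarrow> real^'d \<Rightarrow> real^'d \<Rightarrow> real \<Rightarrow> real^('d::finite option)^('d option)" where
  "block A b c s = (\<chi> i j. case i of
      Some i' \<Rightarrow> (case j of Some j' \<Rightarrow> A $ i' $ j' | None \<Rightarrow> b $ i')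
    | None \<Rightarrow> (case j of Some j' \<Rightarrow> c $ j' | None \<Rightarrow> s))"

definition diagm :: "('d::finite \<Rightarrow> real) \<Rightarrow> real^'d^'d" where
  "diagm t = (\<chi> i j. if i = j then t i else 0)"

definition Fset :: "(real^'d::finite) set \<Rightarrow> real^('d::finite option)^('d option) \<Rightarrow> real^'d \<Rightarrow> real set" where
  "Fset D M t = {ypart w | w. w \<in> row_lattice M \<and> ypart w > 0 \<and> xpart w + t \<in> D}"

definition F :: "(real^'d::finite) set \<Rightarrow> real^('d::finite option)^('d option) \<Rightarrow> real^'d \<Rightarrow> ereal" where
  "F D M t = (if \<exists>y\<in>Fset D M t. \<forall>z\<in>Fset D M t. y \<le> z
              then ereal (THE y. y \<in> Fset D M t \<and> (\<forall>z\<in>Fset D M t. y \<le> z))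
              else \<infinity>)"

end

theory Submission
  imports Defs
begin

lemma floor_eq_diff: "\<lfloor>a::real\<rfloor> = \<lfloor>b\<rfloor> \<Longrightarrow> \<bar>a - b\<bar> < 1"
  unfolding abs_less_iff
  using of_int_floor_le[of a] of_int_floor_le[of b] real_of_int_floor_gt_diff_one[of a]
    real_of_int_floor_gt_diff_one[of b] by linarith

lemma div_diff_aux: "(a - c) / w - (b - c) / (w::real) = (a - b) / w"
  by (cases "w = 0") (simp_all add: field_simps)

lemma box_pigeon:
  fixes X :: "'x set" and K :: "'k set" and \<phi> :: "'x \<Rightarrow> 'k \<Rightarrow> real"
  assumes "finite X" "finite K"
    and rng: "\<And>x \<kappa>. x \<in> X \<Longrightarrow> \<kappa> \<in> K \<Longrightarrow> lo \<kappa> \<le> \<phi> x \<kappa> \<and> \<phi> x \<kappa> \<le> hi \<kappa>"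
    and wpos: "\<And>\<kappa>. \<kappa> \<in> K \<Longrightarrow> w \<kappa> > 0"
    and lohi: "\<And>\<kappa>. \<kappa> \<in> K \<Longrightarrow> lo \<kappa> \<le> hi \<kappa>"
    and cnt: "(\<Prod>\<kappa>\<in>K. (hi \<kappa> - lo \<kappa>) / w \<kappa> + 1) < real (card X)"
  shows "\<exists>x\<in>X. \<exists>x'\<in>X. x \<noteq> x' \<and> (\<forall>\<kappa>\<in>K. \<bar>\<phi> x \<kappa> - \<phi> x' \<kappa>\<bar> < w \<kappa>)"
proof -
  define f where "f x = restrict (\<lambda>\<kappa>. \<lfloor>(\<phi> x \<kappa> - lo \<kappa>) / w \<kappa>\<rfloor>) K" for x
  define C where "C = PiE K (\<lambda>\<kappa>. {0..\<lfloor>(hi \<kappa> - lo \<kappa>) / w \<kappa>\<rfloor>})"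
  have sub: "f ` X \<subseteq> C"
  proof
    fix y assume "y \<in> f ` X"
    then obtain x where x: "x \<in> X" "y = f x" by auto
    have "\<lfloor>(\<phi> x \<kappa> - lo \<kappa>) / w \<kappa>\<rfloor> \<in> {0..\<lfloor>(hi \<kappa> - lo \<kappa>) / w \<kappa>\<rfloor>}" if "\<kappa> \<in> K" for \<kappa>
    proof -
      have w: "w \<kappa> > 0" using wpos that by auto
      have r: "lo \<kappa> \<le> \<phi> x \<kappa>" "\<phi> x \<kappa> \<le> hi \<kappa>" using rng x(1) that by auto
      have "0 \<le> (\<phi> x \<kappa> - lo \<kappa>) / w \<kappa>" using w r by auto
      moreover have "(\<phi> x \<kappa> - lo \<kappa>) / w \<kappa> \<le> (hi \<kappa> - lo \<kappa>) / w \<kappa>"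
        using w r by (simp add: divide_right_mono)
      ultimately show ?thesis by (auto intro: floor_mono)
    qed
    then show "y \<in> C" unfolding C_def x(2) f_def by auto
  qed
  have fC: "finite C" unfolding C_def using assms(2) by (auto intro!: finite_PiE)
  have "real (card C) = (\<Prod>\<kappa>\<in>K. real (nat (\<lfloor>(hi \<kappa> - lo \<kappa>) / w \<kappa>\<rfloor> + 1)))"
    unfolding C_def using assms(2) by (simp add: card_PiE)
  also have "\<dots> \<le> (\<Prod>\<kappa>\<in>K. (hi \<kappa> - lo \<kappa>) / w \<kappa> + 1)"
  proof (rule prod_mono)
    fix \<kappa> assume "\<kappa> \<in> K"
    show "0 \<le> real (nat (\<lfloor>(hi \<kappa> - lo \<kappa>) / w \<kappa>\<rfloor> + 1)) \<and>
          real (nat (\<lfloor>(hi \<kappa> - lo \<kappa>) / w \<kappa>\<rfloor> + 1)) \<le> (hi \<kappa> - lo \<kappa>) / w \<kappa> + 1"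
    proof -
      have "0 \<le> (hi \<kappa> - lo \<kappa>) / w \<kappa>"
        using wpos[OF \<open>\<kappa> \<in> K\<close>] lohi[OF \<open>\<kappa> \<in> K\<close>] by (intro divide_nonneg_pos) auto
      hence "0 \<le> \<lfloor>(hi \<kappa> - lo \<kappa>) / w \<kappa>\<rfloor> + 1" by linarith
      hence "real (nat (\<lfloor>(hi \<kappa> - lo \<kappa>) / w \<kappa>\<rfloor> + 1)) = of_int (\<lfloor>(hi \<kappa> - lo \<kappa>) / w \<kappa>\<rfloor> + 1)"
        by simp
      thus ?thesis by linarith
    qed
  qed
  finally have "card C < card X" using cnt by linarith
  hence "card (f ` X) < card X" using card_mono[OF fC sub] by linarith
  hence "\<not> inj_on f X" by (rule pigeonhole)
  then obtain x x' where xx: "x \<in> X" "x' \<in> X" "x \<noteq> x'" "f x = f x'"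
    unfolding inj_on_def by auto
  have "\<bar>\<phi> x \<kappa> - \<phi> x' \<kappa>\<bar> < w \<kappa>" if "\<kappa> \<in> K" for \<kappa>
  proof -
    have w: "w \<kappa> > 0" using wpos that by auto
    have "\<lfloor>(\<phi> x \<kappa> - lo \<kappa>) / w \<kappa>\<rfloor> = \<lfloor>(\<phi> x' \<kappa> - lo \<kappa>) / w \<kappa>\<rfloor>"
    proof -
      have "f x \<kappa> = f x' \<kappa>" using xx(4) by simp
      thus ?thesis using that unfolding f_def by simp
    qed
    hence "\<bar>(\<phi> x \<kappa> - lo \<kappa>) / w \<kappa> - (\<phi> x' \<kappa> - lo \<kappa>) / w \<kappa>\<bar> < 1"
      by (rule floor_eq_diff)
    hence "\<bar>(\<phi> x \<kappa> - \<phi> x' \<kappa>) / w \<kappa>\<bar> < 1" by (simp only: div_diff_aux)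
    have "\<bar>\<phi> x \<kappa> - \<phi> x' \<kappa>\<bar> = \<bar>(\<phi> x \<kappa> - \<phi> x' \<kappa>) / w \<kappa>\<bar> * w \<kappa>"
      using w by (simp add: abs_divide)
    also have "\<dots> < 1 * w \<kappa>" using w \<open>\<bar>(\<phi> x \<kappa> - \<phi> x' \<kappa>) / w \<kappa>\<bar> < 1\<close>
      by (intro mult_strict_right_mono) auto
    finally show ?thesis by simp
  qed
  thus ?thesis using xx by blast
qed

lemma dZ_round: "dZ x = \<bar>x - of_int (round x)\<bar>"
proof (rule antisym)
  show "dZ x \<le> \<bar>x - of_int (round x)\<bar>"
    unfolding dZ_def using infdist_le[of "of_int (round x)" "\<int>" x]
    by (simp add: dist_real_def)
  have ne: "(\<int>::real set) \<noteq> {}" by auto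
  show "\<bar>x - of_int (round x)\<bar> \<le> dZ x"
    unfolding dZ_def infdist_def using ne
    by (auto intro!: cINF_greatest simp: dist_real_def elim!: Ints_cases intro: round_diff_minimal)
qed

lemma dZ_le: "p \<in> \<int> \<Longrightarrow> dZ x \<le> \<bar>x - p\<bar>"
  by (auto simp: dZ_round elim!: Ints_cases intro: round_diff_minimal)

lemma dZ_nonneg: "0 \<le> dZ x" by (simp add: dZ_round)

lemma dZ_half: "dZ x \<le> 1/2"
  using of_int_round_abs_le[of x] by (simp add: dZ_round abs_minus_commute)

lemma dZ_minus: "dZ (- x) = dZ x"
proof (rule antisym)
  have "dZ (- x) \<le> \<bar>- x - (- of_int (round x))\<bar>" by (rule dZ_le) auto
  thus "dZ (- x) \<le> dZ x" by (simp add: dZ_round abs_minus_commute)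
  have "dZ x \<le> \<bar>x - (- of_int (round (-x)))\<bar>" by (rule dZ_le) auto
  also have "\<dots> = \<bar>- x - of_int (round (-x))\<bar>" by (simp add: abs_minus_commute)
  finally show "dZ x \<le> dZ (-x)" by (simp only: dZ_round[of "-x"])
qed

lemma dZ_zero: "dZ x = 0 \<Longrightarrow> x \<in> \<int>"
  by (simp add: dZ_round) (metis Ints_of_int)

lemma dZ_int_zero: "x \<in> \<int> \<Longrightarrow> dZ x = 0"
  using dZ_le[of x x] dZ_nonneg[of x] by simp

lemma badness:
  fixes \<alpha> :: "real^'d"
  assumes "liminf (\<lambda>n::nat. ereal (real n * (\<Prod>i\<in>UNIV. dZ (real n * \<alpha> $ i)))) > 0"
  shows "\<exists>c0>0. \<forall>q::int. q \<noteq> 0 \<longrightarrow> c0 \<le> \<bar>real_of_int q\<bar> * (\<Prod>i\<in>UNIV. dZ (of_int q * \<alpha> $ i))"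
proof -
  define f where "f n = real n * (\<Prod>i\<in>UNIV. dZ (real n * \<alpha> $ i))" for n
  obtain c where c: "c > 0" "ereal c < liminf (\<lambda>n. ereal (f n))"
  proof (cases "liminf (\<lambda>n. ereal (f n))")
    case (real r) thus ?thesis using assms that[of "r/2"] by (auto simp: f_def)
  next
    case PInf thus ?thesis using that[of 1] by auto
  next
    case MInf thus ?thesis using assms by (auto simp: f_def)
  qed
  from less_LiminfD[OF c(2)] obtain n0 where n0: "\<And>n. n \<ge> n0 \<Longrightarrow> c < f n"
    by (auto simp: eventually_sequentially)
  have pos: "f n > 0" if "n \<ge> 1" for n
  proof -
    have "dZ (real n * \<alpha> $ i) \<noteq> 0" for i
    proof
      assume "dZ (real n * \<alpha> $ i) = 0"
      hence z: "real n * \<alpha> $ i \<in> \<int>" by (rule dZ_zero)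
      have "real (n * (n0+1)) * \<alpha> $ i = real (n0+1) * (real n * \<alpha> $ i)" by (simp add: algebra_simps)
      also have "\<dots> \<in> \<int>" using z by (metis Ints_mult Ints_of_nat)
      finally have "dZ (real (n * (n0+1)) * \<alpha> $ i) = 0" by (rule dZ_int_zero)
      hence "(\<Prod>j\<in>UNIV. dZ (real (n * (n0+1)) * \<alpha> $ j)) = 0"
        by (intro prod_zero) auto
      hence "f (n * (n0+1)) = 0" unfolding f_def by (simp only: mult_zero_right)
      moreover have "n * (n0 + 1) \<ge> n0" proof -
        have "1 * (n0+1) \<le> n * (n0+1)" using that by (rule mult_le_mono1)
        thus ?thesis by simp
      qed
      ultimately show False using n0 c(1) by fastforce
    qed
    hence "(\<Prod>i\<in>UNIV. dZ (real n * \<alpha> $ i)) > 0"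
      using dZ_nonneg by (simp add: order.not_eq_order_implies_strict prod_pos)
    thus ?thesis using that unfolding f_def by simp
  qed
  define c0 where "c0 = Min (insert c (f ` {1..n0}))"
  have c0pos: "c0 > 0" unfolding c0_def using c(1) pos by (auto)
  have c0le: "c0 \<le> f n" if "n \<ge> 1" for n
  proof (cases "n \<le> n0")
    case True
    hence "f n \<in> insert c (f ` {1..n0})" using that by auto
    thus ?thesis unfolding c0_def by (intro Min_le) auto
  next
    case False
    hence "c0 \<le> c" unfolding c0_def by auto
    thus ?thesis using n0[of n] False by linarith
  qed
  show ?thesis
  proof (intro exI[of _ c0] conjI allI impI c0pos)
    fix q :: int assume "q \<noteq> 0"
    define n where "n = nat \<bar>q\<bar>"
    have n1: "n \<ge> 1" using \<open>q \<noteq> 0\<close> unfolding n_def by simp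
    have "(\<Prod>i\<in>UNIV. dZ (of_int q * \<alpha> $ i)) = (\<Prod>i\<in>UNIV. dZ (real n * \<alpha> $ i))"
    proof (rule prod.cong[OF refl])
      fix i
      show "dZ (of_int q * \<alpha> $ i) = dZ (real n * \<alpha> $ i)"
      proof (cases "q \<ge> 0")
        case True thus ?thesis unfolding n_def by simp
      next
        case False
        hence "real n * \<alpha> $ i = - (of_int q * \<alpha> $ i)" unfolding n_def by simp
        thus ?thesis by (simp add: dZ_minus)
      qed
    qed
    moreover have "\<bar>real_of_int q\<bar> = real n" unfolding n_def by simp
    ultimately show "c0 \<le> \<bar>real_of_int q\<bar> * (\<Prod>i\<in>UNIV. dZ (of_int q * \<alpha> $ i))"
      using c0le[OF n1] unfolding f_def by simp
  qed
qed

lemma prod_sub_ge: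
  fixes g :: "'d::finite \<Rightarrow> real"
  assumes "\<And>i. 0 \<le> g i" "\<And>i. g i \<le> 1"
  shows "(\<Prod>i\<in>UNIV. g i) \<le> (\<Prod>i\<in>J. g i)"
proof -
  have "(\<Prod>i\<in>UNIV. g i) = (\<Prod>i\<in>J. g i) * (\<Prod>i\<in>UNIV - J. g i)"
    using prod.subset_diff[of J UNIV g] by (simp add: mult.commute)
  also have "\<dots> \<le> (\<Prod>i\<in>J. g i) * 1"
    using assms by (intro mult_left_mono prod_le_1 prod_nonneg) auto
  finally show ?thesis by simp
qed

definition intg :: "real^'n \<Rightarrow> bool" where "intg v \<longleftrightarrow> (\<forall>l. v $ l \<in> \<int>)"

definition zpt :: "real^'d \<Rightarrow> 'd set \<Rightarrow> ('d \<Rightarrow> real) \<Rightarrow> real^('d::finite option) \<Rightarrow> real^('d option)" where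
  "zpt \<alpha> J N v = (\<chi> l. case l of Some i \<Rightarrow> (if i \<in> J then v $ Some i / N i else 0)
      | None \<Rightarrow> ((\<Sum>i\<in>J. v $ Some i * \<alpha> $ i) + v $ None) * prod N J)"

lemma zpt_Some[simp]: "zpt \<alpha> J N v $ Some i = (if i \<in> J then v $ Some i / N i else 0)"
  by (simp add: zpt_def)

lemma zpt_None[simp]: "zpt \<alpha> J N v $ None = ((\<Sum>i\<in>J. v $ Some i * \<alpha> $ i) + v $ None) * prod N J"
  by (simp add: zpt_def)

lemma zpt_linear: "linear (zpt \<alpha> J N)"
proof (rule linearI)
  fix v w :: "real^'a option" and c :: real
  show "zpt \<alpha> J N (v + w) = zpt \<alpha> J N v + zpt \<alpha> J N w"
    unfolding vec_eq_iff
  proof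
    fix l show "zpt \<alpha> J N (v + w) $ l = (zpt \<alpha> J N v + zpt \<alpha> J N w) $ l"
      by (cases l) (auto simp: add_divide_distrib sum.distrib algebra_simps)
  qed
  show "zpt \<alpha> J N (c *\<^sub>R v) = c *\<^sub>R zpt \<alpha> J N v"
    unfolding vec_eq_iff
  proof
    fix l show "zpt \<alpha> J N (c *\<^sub>R v) $ l = (c *\<^sub>R zpt \<alpha> J N v) $ l"
      by (cases l) (auto simp: sum_distrib_left algebra_simps)
  qed
qed

lemma zpt_diff: "zpt \<alpha> J N (v - w) = zpt \<alpha> J N v - zpt \<alpha> J N w"
  using linear_diff[OF zpt_linear] by blast

lemma intg_diff: "intg v \<Longrightarrow> intg w \<Longrightarrow> intg (v - w)"
  unfolding intg_def by auto

lemma core_contra: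
  fixes \<alpha> :: "real^'d" and J :: "'d set" and p :: "'d \<Rightarrow> int"
  assumes bad: "\<And>q::int. q \<noteq> 0 \<Longrightarrow> c0 \<le> \<bar>of_int q\<bar> * (\<Prod>i\<in>J. dZ (of_int q * \<alpha> $ i))"
    and N: "\<And>i. i \<in> J \<Longrightarrow> N i \<ge> 1"
    and q: "q \<noteq> 0"
    and B: "0 \<le> B" "B \<le> 1" "B < c0"
    and F: "\<And>i. i \<in> J \<Longrightarrow> \<bar>(of_int (p i) - of_int q * \<alpha> $ i) * N i\<bar> \<le> B"
    and qb: "\<bar>of_int q\<bar> \<le> B * prod N J"
  shows False
proof -
  have Np: "N i > 0" if "i \<in> J" for i using N[OF that] by linarith
  have d: "dZ (of_int q * \<alpha> $ i) \<le> B / N i" if "i \<in> J" for i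
  proof -
    have "dZ (of_int q * \<alpha> $ i) \<le> \<bar>of_int q * \<alpha> $ i - of_int (p i)\<bar>" by (rule dZ_le) auto
    also have "\<dots> = \<bar>(of_int (p i) - of_int q * \<alpha> $ i) * N i\<bar> / N i"
      using Np[OF that] by (simp add: abs_mult abs_minus_commute)
    also have "\<dots> \<le> B / N i" using F[OF that] Np[OF that] by (simp add: divide_right_mono)
    finally show ?thesis .
  qed
  have "(\<Prod>i\<in>J. dZ (of_int q * \<alpha> $ i)) \<le> (\<Prod>i\<in>J. B / N i)"
    by (rule prod_mono) (use d dZ_nonneg in auto)
  also have "\<dots> = (\<Prod>i\<in>J. B) / prod N J" by (rule prod_dividef)
  also have "\<dots> = B ^ card J / prod N J" by (simp only: prod_constant)
  finally have pr: "(\<Prod>i\<in>J. dZ (of_int q * \<alpha> $ i)) \<le> B ^ card J / prod N J" .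
  have Pp: "prod N J > 0" using Np by (simp add: prod_pos)
  have "c0 \<le> \<bar>of_int q\<bar> * (\<Prod>i\<in>J. dZ (of_int q * \<alpha> $ i))" using bad[OF q] .
  also have "\<dots> \<le> (B * prod N J) * (B ^ card J / prod N J)"
    by (rule mult_mono[OF qb pr]) (use B Pp in \<open>auto intro: prod_nonneg dZ_nonneg\<close>)
  also have "\<dots> = B ^ Suc (card J)"
  proof -
    define P where "P = prod N J"
    have "P \<noteq> 0" unfolding P_def using Pp by linarith
    thus ?thesis unfolding P_def[symmetric] by (simp add: field_simps)
  qed
  also have "\<dots> \<le> B"
  proof -
    have h: "B ^ card J \<le> 1" using B by (simp add: power_le_one)
    show ?thesis using mult_left_le[OF h B(1)] by simp
  qed
  finally show False using B by linarith
qed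

lemma G_ident:
  fixes \<alpha> :: "real^'d" and p :: "'d \<Rightarrow> int" and v :: "real^'d option"
  assumes "\<And>i. i \<in> J \<Longrightarrow> N i \<noteq> 0" "prod N J \<noteq> 0"
  shows "(\<Sum>i\<in>J. of_int (p i) * v $ Some i) + of_int q * v $ None =
    (\<Sum>i\<in>J. ((of_int (p i) - of_int q * \<alpha> $ i) * N i) * zpt \<alpha> J N v $ Some i)
      + (of_int q / prod N J) * zpt \<alpha> J N v $ None"
proof -
  define P where "P = prod N J"
  have P0: "P \<noteq> 0" using assms(2) unfolding P_def .
  have "(\<Sum>i\<in>J. ((of_int (p i) - of_int q * \<alpha> $ i) * N i) * zpt \<alpha> J N v $ Some i)
      = (\<Sum>i\<in>J. of_int (p i) * v $ Some i - of_int q * (v $ Some i * \<alpha> $ i))"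
    using assms(1) by (intro sum.cong) (auto simp: field_simps)
  also have "\<dots> = (\<Sum>i\<in>J. of_int (p i) * v $ Some i) - of_int q * (\<Sum>i\<in>J. v $ Some i * \<alpha> $ i)"
    by (simp add: sum_subtractf sum_distrib_left)
  finally have e: "(\<Sum>i\<in>J. ((of_int (p i) - of_int q * \<alpha> $ i) * N i) * zpt \<alpha> J N v $ Some i)
      = (\<Sum>i\<in>J. of_int (p i) * v $ Some i) - of_int q * (\<Sum>i\<in>J. v $ Some i * \<alpha> $ i)" .
  have "(of_int q / prod N J) * zpt \<alpha> J N v $ None = of_int q * ((\<Sum>i\<in>J. v $ Some i * \<alpha> $ i) + v $ None)"
    unfolding zpt_None P_def[symmetric] using P0 by (simp add: field_simps)
  thus ?thesis using e by (simp add: algebra_simps)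
qed

lemma G_int:
  assumes "intg v"
  shows "(\<Sum>i\<in>J. of_int (p i) * v $ Some i) + of_int (q::int) * v $ None \<in> \<int>"
  using assms unfolding intg_def by (intro Ints_add Ints_sum Ints_mult) auto

lemma Ints_small: "x \<in> \<int> \<Longrightarrow> \<bar>x\<bar> < 1 \<Longrightarrow> x = (0::real)"
  by (auto elim!: Ints_cases)

lemma round_F: "\<bar>(of_int (round x) - x) * (n::real)\<bar> \<le> n / 2" if "n \<ge> 0"
proof -
  have "\<bar>of_int (round x) - x\<bar> \<le> 1/2" using of_int_round_abs_le[of x] by simp
  hence "\<bar>of_int (round x) - x\<bar> * n \<le> 1/2 * n" using that by (intro mult_right_mono) auto
  thus ?thesis using that by (simp add: abs_mult)
qed

lemma stepA:
  fixes \<alpha> :: "real^'d" and J :: "'d set" and N :: "'d \<Rightarrow> real" and v :: "real^'d option"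
  assumes c0: "c0 > 0"
    and bad: "\<And>q::int. q \<noteq> 0 \<Longrightarrow> c0 \<le> \<bar>of_int q\<bar> * (\<Prod>i\<in>J. dZ (of_int q * \<alpha> $ i))"
    and N: "\<And>i. i \<in> J \<Longrightarrow> N i \<ge> 1"
    and v: "intg v" and nz: "zpt \<alpha> J N v \<noteq> 0"
  shows "\<exists>l. (min (1/2) (c0/2) / (real (card J) + 1)) ^ (card J + 1) / (32 * 3 ^ card J)
             \<le> \<bar>zpt \<alpha> J N v $ l\<bar>"
proof (rule ccontr)
  define j where "j = card J"
  define r where "r = min (1/2) (c0/2)"
  define \<rho> where "\<rho> = r / (real j + 1)"
  define c1 where "c1 = \<rho> ^ (j + 1) / (32 * 3 ^ j)"
  define z where "z = zpt \<alpha> J N v"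
  define P where "P = prod N J"
  define S where "S = (\<Sum>i\<in>J. N i)"
  assume "\<not> ?thesis"
  hence small: "\<bar>z $ l\<bar> < c1" for l unfolding c1_def \<rho>_def r_def j_def z_def by (auto simp: not_le)
  have Npos: "N i > 0" if "i \<in> J" for i using N[OF that] by linarith
  have P1: "P \<ge> 1" unfolding P_def using N by (intro prod_ge_1) auto
  have Ppos: "P > 0" using P1 by linarith
  have S0: "S \<ge> 0" unfolding S_def using Npos by (intro sum_nonneg) (auto intro: less_imp_le)
  have r0: "0 < r" "r \<le> 1/2" "r < c0" using c0 unfolding r_def by auto
  have \<rho>0: "0 < \<rho>" "\<rho> \<le> r" using r0 unfolding \<rho>_def by (auto simp: field_simps)
  have \<rho>1: "\<rho> \<le> 1" using \<rho>0 r0 by linarith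
  have jr': "(real j + 1) * \<rho> = r"
  proof -
    have "real j + 1 \<noteq> 0" by (metis of_nat_Suc of_nat_eq_0_iff add.commute nat.distinct(1))
    thus ?thesis unfolding \<rho>_def by simp
  qed
  hence jr: "real j * \<rho> + \<rho> = r" by (simp add: algebra_simps)
  have c1pos: "c1 > 0" unfolding c1_def using \<rho>0 by simp
  obtain l0 where l0: "\<And>l. \<bar>z $ l\<bar> \<le> \<bar>z $ l0\<bar>"
  proof -
    have "Max (range (\<lambda>l. \<bar>z $ l\<bar>)) \<in> range (\<lambda>l. \<bar>z $ l\<bar>)" by (intro Max_in) auto
    then obtain l0 where "Max (range (\<lambda>l. \<bar>z $ l\<bar>)) = \<bar>z $ l0\<bar>" by (elim rangeE)
    moreover have "\<bar>z $ l\<bar> \<le> Max (range (\<lambda>l. \<bar>z $ l\<bar>))" for l by (intro Max_ge) auto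
    ultimately show ?thesis using that by metis
  qed
  define \<delta> where "\<delta> = \<bar>z $ l0\<bar>"
  have zle: "\<bar>z $ l\<bar> \<le> \<delta>" for l using l0 unfolding \<delta>_def .
  have \<delta>pos: "\<delta> > 0"
  proof -
    obtain l where "z $ l \<noteq> 0" using nz unfolding z_def by (metis vec_eq_iff zero_index)
    thus ?thesis using zle[of l] by linarith
  qed
  have \<delta>c1: "\<delta> < c1" unfolding \<delta>_def by (rule small)
  have ident: "(\<Sum>i\<in>J. of_int (p i) * v $ Some i) + of_int q * v $ None =
    (\<Sum>i\<in>J. ((of_int (p i) - of_int q * \<alpha> $ i) * N i) * z $ Some i) + (of_int q / P) * z $ None"
    for p :: "'d \<Rightarrow> int" and q :: int
  proof -
    have Nne: "\<And>i. i \<in> J \<Longrightarrow> N i \<noteq> 0" using Npos by force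
    have Pne: "prod N J \<noteq> 0" using Ppos unfolding P_def by linarith
    show ?thesis unfolding z_def P_def by (rule G_ident[OF Nne Pne])
  qed
  have integ: "(\<Sum>i\<in>J. of_int (p i) * v $ Some i) + of_int q * v $ None \<in> \<int>"
    for p :: "'d \<Rightarrow> int" and q :: int using v by (rule G_int)
  show False
  proof (cases l0)
    case None
    have zy: "\<bar>z $ None\<bar> = \<delta>" unfolding \<delta>_def None ..
    define a where "a = (2/\<rho>) ^ j"
    define Q where "Q = \<lceil>2 * a * P * (2 * \<delta> * S + 1)\<rceil>"
    define F where "F q i = (of_int (round (of_int q * \<alpha> $ i)) - of_int q * \<alpha> $ i) * N i"
      for q :: int and i
    define G where "G q = (\<Sum>i\<in>J. of_int (round (of_int q * \<alpha> $ i)) * v $ Some i) + of_int q * v $ None"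
      for q :: int
    define Gm where "Gm = \<delta> * (S + of_int Q / P)"
    have a0: "a > 0" unfolding a_def using \<rho>0 by simp
    have ac1: "a * c1 \<le> 1/32"
    proof -
      have "a * c1 = 2 ^ j * \<rho> / (32 * 3 ^ j)" unfolding a_def c1_def using \<rho>0
        by (simp add: power_divide field_simps)
      also have "\<dots> \<le> 1 / 32"
      proof -
        have "2 ^ j * \<rho> \<le> (3::real) ^ j * 1"
          using \<rho>0 \<rho>1 by (intro mult_mono power_mono) auto
        thus ?thesis by (simp add: field_simps)
      qed
      finally show ?thesis .
    qed
    have a\<delta>: "2 * a * \<delta> \<le> 1/2"
    proof -
      have "a * \<delta> \<le> a * c1" using a0 \<delta>c1 by simp
      thus ?thesis using ac1 by linarith
    qed
    have Qge: "of_int Q \<ge> 2 * a * P * (2 * \<delta> * S + 1)" unfolding Q_def by (rule le_of_int_ceiling)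
    have Q0: "Q \<ge> 0"
    proof -
      have "0 \<le> 2 * a * P * (2 * \<delta> * S + 1)" using a0 Ppos \<delta>pos S0 by simp
      thus ?thesis using Qge by linarith
    qed
    have Fb: "\<bar>F q i\<bar> \<le> N i / 2" if "i \<in> J" for q i
      unfolding F_def using Npos[OF that] by (intro round_F) simp
    have Fb2: "- (N i / 2) \<le> F q i \<and> F q i \<le> N i / 2" if "i \<in> J" for q i
      using Fb[OF that, of q] unfolding abs_le_iff by linarith
    have Gid: "G q = (\<Sum>i\<in>J. F q i * z $ Some i) + (of_int q / P) * z $ None" for q
      unfolding G_def F_def by (rule ident)
    have Gb: "\<bar>G q\<bar> \<le> Gm" if "q \<in> {0..Q}" for q
    proof -
      have "\<bar>G q\<bar> \<le> (\<Sum>i\<in>J. \<bar>F q i * z $ Some i\<bar>) + \<bar>(of_int q / P) * z $ None\<bar>"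
        unfolding Gid by (rule order.trans[OF abs_triangle_ineq add_mono[OF sum_abs order.refl]])
      also have "\<dots> \<le> (\<Sum>i\<in>J. N i * \<delta>) + (of_int Q / P) * \<delta>"
      proof (intro add_mono sum_mono)
        fix i assume i: "i \<in> J"
        have "\<bar>F q i * z $ Some i\<bar> = \<bar>F q i\<bar> * \<bar>z $ Some i\<bar>" by (simp add: abs_mult)
        also have "\<dots> \<le> (N i / 2) * \<delta>" using Fb[OF i] zle[of "Some i"] Npos[OF i]
          by (intro mult_mono) auto
        also have "\<dots> \<le> N i * \<delta>" using Npos[OF i] \<delta>pos by simp
        finally show "\<bar>F q i * z $ Some i\<bar> \<le> N i * \<delta>" .
      next
        have "\<bar>(of_int q / P) * z $ None\<bar> = (of_int q / P) * \<delta>"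
          using that Ppos zy by (simp add: abs_mult)
        also have "\<dots> \<le> (of_int Q / P) * \<delta>" using that Ppos \<delta>pos
          by (intro mult_right_mono divide_right_mono) auto
        finally show "\<bar>(of_int q / P) * z $ None\<bar> \<le> (of_int Q / P) * \<delta>" .
      qed
      also have "\<dots> = Gm" unfolding Gm_def S_def by (simp add: sum_distrib_left[symmetric] sum_distrib_right algebra_simps)
      finally show ?thesis .
    qed
    define \<phi> where "\<phi> q \<kappa> = (case \<kappa> of None \<Rightarrow> G q | Some i \<Rightarrow> F q i)" for q :: int and \<kappa> :: "'d option"
    define lo where "lo \<kappa> = (case \<kappa> of None \<Rightarrow> - Gm | Some i \<Rightarrow> - N i / 2)" for \<kappa> :: "'d option"
    define hi where "hi \<kappa> = (case \<kappa> of None \<Rightarrow> Gm | Some i \<Rightarrow> N i / 2)" for \<kappa> :: "'d option"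
    define w where "w \<kappa> = (case \<kappa> of None \<Rightarrow> 1 | Some i \<Rightarrow> \<rho>)" for \<kappa> :: "'d option"
    define K where "K = insert None (Some ` J)"
    have Gm0: "Gm \<ge> 0" unfolding Gm_def using \<delta>pos S0 Q0 Ppos by simp
    have cnt: "(\<Prod>\<kappa>\<in>K. (hi \<kappa> - lo \<kappa>) / w \<kappa> + 1) < real (card {0..Q})"
    proof -
      have "(\<Prod>\<kappa>\<in>K. (hi \<kappa> - lo \<kappa>) / w \<kappa> + 1) = (2 * Gm + 1) * (\<Prod>i\<in>J. N i / \<rho> + 1)"
        unfolding K_def by (simp add: prod.reindex hi_def lo_def w_def)
      also have "\<dots> \<le> (2 * Gm + 1) * (\<Prod>i\<in>J. 2 / \<rho> * N i)"
      proof (intro mult_left_mono prod_mono conjI)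
        fix i assume i: "i \<in> J"
        show "0 \<le> N i / \<rho> + 1" using Npos[OF i] \<rho>0 by simp
        have "1 \<le> N i / \<rho>" using N[OF i] \<rho>0 \<rho>1 by (simp add: field_simps)
        thus "N i / \<rho> + 1 \<le> 2 / \<rho> * N i" by simp
      qed (use Gm0 in simp)
      also have "(\<Prod>i\<in>J. 2 / \<rho> * N i) = a * P" unfolding a_def P_def j_def
        by (simp only: prod.distrib prod_constant)
      also have "(2 * Gm + 1) * (a * P) = a * P * (2 * \<delta> * S + 1) + 2 * a * \<delta> * of_int Q"
        unfolding Gm_def using Ppos by (simp add: field_simps)
      also have "\<dots> \<le> of_int Q / 2 + of_int Q / 2"
      proof (rule add_mono)
        show "a * P * (2 * \<delta> * S + 1) \<le> of_int Q / 2" using Qge by linarith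
        have "2 * a * \<delta> * of_int Q \<le> (1/2) * of_int Q" using a\<delta> Q0 by (intro mult_right_mono) auto
        thus "2 * a * \<delta> * of_int Q \<le> of_int Q / 2" by simp
      qed
      also have "\<dots> < real (card {0..Q})" using Q0 by simp
      finally show ?thesis .
    qed
    obtain q1 q2 where q12: "q1 \<in> {0..Q}" "q2 \<in> {0..Q}" "q1 \<noteq> q2"
      and cl: "\<And>\<kappa>. \<kappa> \<in> K \<Longrightarrow> \<bar>\<phi> q1 \<kappa> - \<phi> q2 \<kappa>\<bar> < w \<kappa>"
    proof -
      have "\<exists>x\<in>{0..Q}. \<exists>x'\<in>{0..Q}. x \<noteq> x' \<and> (\<forall>\<kappa>\<in>K. \<bar>\<phi> x \<kappa> - \<phi> x' \<kappa>\<bar> < w \<kappa>)"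
      proof (rule box_pigeon[OF _ _ _ _ _ cnt])
        show "finite {0..Q}" by simp
        show "finite K" unfolding K_def by simp
        fix x \<kappa> assume x: "x \<in> {0..Q}" and k: "\<kappa> \<in> K"
        show "lo \<kappa> \<le> \<phi> x \<kappa> \<and> \<phi> x \<kappa> \<le> hi \<kappa>"
          using k Gb[OF x] Fb2 unfolding K_def lo_def hi_def \<phi>_def by (auto simp: abs_le_iff)
      next
        fix \<kappa> assume k: "\<kappa> \<in> K"
        show "w \<kappa> > 0" using k \<rho>0 unfolding K_def w_def by auto
        show "lo \<kappa> \<le> hi \<kappa>" using k Gm0 Npos unfolding K_def lo_def hi_def
          by (auto simp: less_imp_le)
      qed
      thus ?thesis using that by blast
    qed
    define q where "q = q1 - q2"
    define p where "p i = round (of_int q1 * \<alpha> $ i) - round (of_int q2 * \<alpha> $ i)" for i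
    have qnz: "q \<noteq> 0" unfolding q_def using q12 by simp
    have Fd: "F q1 i - F q2 i = (of_int (p i) - of_int q * \<alpha> $ i) * N i" for i
      unfolding F_def p_def q_def by (simp add: algebra_simps)
    have Gd: "G q1 - G q2 = (\<Sum>i\<in>J. of_int (p i) * v $ Some i) + of_int q * v $ None"
      unfolding G_def p_def q_def by (simp add: algebra_simps sum_subtractf)
    have "\<bar>G q1 - G q2\<bar> < 1" using cl[of None] unfolding K_def \<phi>_def w_def by simp
    hence G0: "(\<Sum>i\<in>J. of_int (p i) * v $ Some i) + of_int q * v $ None = 0"
      using Gd integ[of p q] Ints_small by metis
    have Fs: "\<bar>(of_int (p i) - of_int q * \<alpha> $ i) * N i\<bar> < \<rho>" if "i \<in> J" for i
      using cl[of "Some i"] that unfolding K_def \<phi>_def w_def Fd[symmetric] by simp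
    have "0 = (\<Sum>i\<in>J. ((of_int (p i) - of_int q * \<alpha> $ i) * N i) * z $ Some i) + (of_int q / P) * z $ None"
      using ident[of p q] G0 by simp
    hence "(of_int q / P) * z $ None = - (\<Sum>i\<in>J. ((of_int (p i) - of_int q * \<alpha> $ i) * N i) * z $ Some i)"
      by linarith
    hence "\<bar>(of_int q / P) * z $ None\<bar> = \<bar>\<Sum>i\<in>J. ((of_int (p i) - of_int q * \<alpha> $ i) * N i) * z $ Some i\<bar>"
      by (simp only: abs_minus_cancel)
    also have "\<dots> \<le> (\<Sum>i\<in>J. \<rho> * \<delta>)"
    proof (rule order.trans[OF sum_abs sum_mono])
      fix i assume i: "i \<in> J"
      show "\<bar>(of_int (p i) - of_int q * \<alpha> $ i) * N i * z $ Some i\<bar> \<le> \<rho> * \<delta>"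
        unfolding abs_mult[of _ "z $ Some i"] using Fs[OF i] zle[of "Some i"]
        by (intro mult_mono) auto
    qed
    also have "\<dots> = real j * \<rho> * \<delta>" unfolding j_def by simp
    finally have "\<bar>of_int q / P\<bar> * \<delta> \<le> real j * \<rho> * \<delta>" using zy by (simp add: abs_mult)
    hence "\<bar>of_int q / P\<bar> \<le> real j * \<rho>" using \<delta>pos by (simp only: mult_le_cancel_right_pos)
    hence "\<bar>of_int q / P\<bar> \<le> r" using jr \<rho>0 by linarith
    hence qb: "\<bar>of_int q\<bar> \<le> r * P"
    proof -
      assume h: "\<bar>of_int q / P\<bar> \<le> r"
      have "\<bar>of_int q :: real\<bar> = \<bar>of_int q / P\<bar> * P" using Ppos by (simp add: abs_divide)
      also have "\<dots> \<le> r * P" using h Ppos by (intro mult_right_mono) auto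
      finally show ?thesis .
    qed
    show False
    proof (rule core_contra[OF bad N qnz _ _ r0(3) _ qb[unfolded P_def]])
      show "0 \<le> r" "r \<le> 1" using r0 by auto
      fix i assume "i \<in> J"
      thus "\<bar>(of_int (p i) - of_int q * \<alpha> $ i) * N i\<bar> \<le> r" using Fs \<rho>0 by force
    qed
  next
    case (Some i0)
    have zi0: "\<bar>z $ Some i0\<bar> = \<delta>" unfolding \<delta>_def Some ..
    have i0J: "i0 \<in> J"
    proof (rule ccontr)
      assume "i0 \<notin> J"
      hence "z $ Some i0 = 0" unfolding z_def by simp
      thus False using zi0 \<delta>pos by simp
    qed
    have j1: "j \<ge> 1"
    proof -
      have "card {i0} \<le> card J" by (rule card_mono) (auto simp: i0J)
      thus ?thesis unfolding j_def by simp
    qed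
    define b where "b = (2/\<rho>) ^ (j - 1)"
    define Q where "Q = \<lfloor>\<rho> * P\<rfloor>"
    define T where "T = \<lceil>S + 4 * b / \<rho>\<rceil>"
    define pp where "pp q t i = round (of_int q * \<alpha> $ i) + (if i = i0 then t else 0)"
      for q t :: int and i
    define F where "F q t i = (of_int (pp q t i) - of_int q * \<alpha> $ i) * N i" for q t :: int and i
    define G where "G q t = (\<Sum>i\<in>J. of_int (pp q t i) * v $ Some i) + of_int q * v $ None"
      for q t :: int
    define Gm where "Gm = \<delta> * (S + (of_int T + 1) * N i0 + 1)"
    have b0: "b > 0" unfolding b_def using \<rho>0 by simp
    have bc1: "4 * b * c1 \<le> \<rho> / 8"
    proof -
      obtain j' where j': "j = Suc j'" using j1 by (cases j) auto
      have "4 * b * c1 = 2 ^ j' * \<rho> * \<rho> / (8 * 3 ^ Suc j')" unfolding b_def c1_def j' using \<rho>0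
        by (simp add: power_divide field_simps)
      also have "\<dots> \<le> \<rho> / 8"
      proof -
        have p23: "(2::real) ^ j' \<le> 3 ^ Suc j'"
        proof -
          have a1: "(2::real) ^ j' \<le> 3 ^ j'" by (rule power_mono) auto
          have a2: "(0::real) \<le> 3 ^ j'" by simp
          show ?thesis unfolding power_Suc using a1 a2 by linarith
        qed
        have "2 ^ j' * \<rho> \<le> (3::real) ^ Suc j' * 1"
          using p23 \<rho>0 \<rho>1 by (intro mult_mono) auto
        hence "2 ^ j' * \<rho> * \<rho> \<le> 3 ^ Suc j' * \<rho>" using \<rho>0 by (intro mult_right_mono) auto
        thus ?thesis by (simp add: field_simps)
      qed
      finally show ?thesis .
    qed
    have b\<delta>: "4 * b * \<delta> \<le> \<rho> / 8"
    proof -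
      have "4 * b * \<delta> \<le> 4 * b * c1" using b0 \<delta>c1 by simp
      thus ?thesis using bc1 by linarith
    qed
    have Q0: "Q \<ge> 0" unfolding Q_def using \<rho>0 Ppos by simp
    have QP: "of_int Q \<le> \<rho> * P" unfolding Q_def by (rule of_int_floor_le)
    have QP1: "\<rho> * P < of_int Q + 1" unfolding Q_def by (rule real_of_int_floor_add_one_gt)
    have Tge: "of_int T \<ge> S + 4 * b / \<rho>" unfolding T_def by (rule le_of_int_ceiling)
    have T0: "T \<ge> 0"
    proof -
      have "0 \<le> S + 4 * b / \<rho>" using S0 b0 \<rho>0 by simp
      thus ?thesis using Tge by linarith
    qed
    have Fb: "\<bar>F q t i\<bar> \<le> N i / 2" if "i \<in> J" "i \<noteq> i0" for q t i
      unfolding F_def pp_def using Npos[OF that(1)] that(2) round_F[of "N i" "of_int q * \<alpha> $ i"] by simp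
    have Fb0: "\<bar>F q t i0\<bar> \<le> (of_int T + 1) * N i0" if "t \<in> {0..T}" for q t
    proof -
      have "\<bar>F q t i0\<bar> = \<bar>(of_int (round (of_int q * \<alpha> $ i0)) - of_int q * \<alpha> $ i0) * N i0 + of_int t * N i0\<bar>"
        unfolding F_def pp_def by (simp add: algebra_simps)
      also have "\<dots> \<le> N i0 / 2 + of_int T * N i0"
        using round_F[of "N i0" "of_int q * \<alpha> $ i0"] Npos[OF i0J] that
        by (intro order.trans[OF abs_triangle_ineq add_mono]) (auto simp: abs_mult intro: mult_right_mono)
      also have "\<dots> \<le> (of_int T + 1) * N i0" using Npos[OF i0J] by (simp add: algebra_simps)
      finally show ?thesis .
    qed
    have Fb2: "- (N i / 2) \<le> F q t i \<and> F q t i \<le> N i / 2" if "i \<in> J" "i \<noteq> i0" for q t i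
      using Fb[OF that, of q t] unfolding abs_le_iff by linarith
    have Gid: "G q t = (\<Sum>i\<in>J. F q t i * z $ Some i) + (of_int q / P) * z $ None" for q t
      unfolding G_def F_def by (rule ident)
    have Gb: "\<bar>G q t\<bar> \<le> Gm" if "q \<in> {0..Q}" "t \<in> {0..T}" for q t
    proof -
      have "\<bar>G q t\<bar> \<le> (\<Sum>i\<in>J. \<bar>F q t i * z $ Some i\<bar>) + \<bar>(of_int q / P) * z $ None\<bar>"
        unfolding Gid by (rule order.trans[OF abs_triangle_ineq add_mono[OF sum_abs order.refl]])
      also have "\<dots> \<le> (\<Sum>i\<in>J. (N i + (if i = i0 then (of_int T + 1) * N i0 else 0)) * \<delta>) + \<delta>"
      proof (intro add_mono sum_mono)
        fix i assume i: "i \<in> J"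
        have "\<bar>F q t i * z $ Some i\<bar> = \<bar>F q t i\<bar> * \<bar>z $ Some i\<bar>" by (simp add: abs_mult)
        also have "\<dots> \<le> (N i + (if i = i0 then (of_int T + 1) * N i0 else 0)) * \<delta>"
        proof (intro mult_mono)
          show "\<bar>F q t i\<bar> \<le> N i + (if i = i0 then (of_int T + 1) * N i0 else 0)"
          proof (cases "i = i0")
            case True
            have h: "\<bar>F q t i0\<bar> \<le> (of_int T + 1) * N i0" by (rule Fb0[OF that(2)])
            show ?thesis using True h Npos[OF i] by auto
          next
            case False
            have h: "\<bar>F q t i\<bar> \<le> N i / 2" by (rule Fb[OF i False])
            show ?thesis using False h Npos[OF i] by auto
          qed
        qed (use zle Npos[OF i] T0 in auto)
        finally show "\<bar>F q t i * z $ Some i\<bar> \<le> (N i + (if i = i0 then (of_int T + 1) * N i0 else 0)) * \<delta>" .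
      next
        have "\<bar>(of_int q / P) * z $ None\<bar> = (of_int q / P) * \<bar>z $ None\<bar>"
          using that Ppos by (simp add: abs_mult)
        also have "\<dots> \<le> 1 * \<delta>"
        proof (intro mult_mono)
          have qle: "of_int q \<le> \<rho> * P" using that(1) QP by simp
          have "of_int q / P \<le> \<rho>" using qle Ppos by (simp add: pos_divide_le_eq mult.commute)
          thus "of_int q / P \<le> 1" using \<rho>1 by linarith
        qed (use zle that Ppos in auto)
        finally show "\<bar>(of_int q / P) * z $ None\<bar> \<le> \<delta>" by simp
      qed
      also have "\<dots> = Gm"
      proof -
        have "(\<Sum>i\<in>J. (N i + (if i = i0 then (of_int T + 1) * N i0 else 0)) * \<delta>)
            = (\<Sum>i\<in>J. N i + (if i = i0 then (of_int T + 1) * N i0 else 0)) * \<delta>"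
          by (simp only: sum_distrib_right)
        also have "(\<Sum>i\<in>J. N i + (if i = i0 then (of_int T + 1) * N i0 else 0)) = S + (of_int T + 1) * N i0"
          unfolding S_def sum.distrib using i0J by simp
        finally show ?thesis unfolding Gm_def by (simp add: algebra_simps)
      qed
      finally show ?thesis .
    qed
    define \<phi> where "\<phi> x \<kappa> = (case \<kappa> of None \<Rightarrow> of_int (fst x) / P | Some None \<Rightarrow> G (fst x) (snd x)
      | Some (Some i) \<Rightarrow> F (fst x) (snd x) i)" for x :: "int \<times> int" and \<kappa> :: "'d option option"
    define lo where "lo \<kappa> = (case \<kappa> of None \<Rightarrow> 0 | Some None \<Rightarrow> - Gm | Some (Some i) \<Rightarrow> - N i / 2)"
      for \<kappa> :: "'d option option"
    define hi where "hi \<kappa> = (case \<kappa> of None \<Rightarrow> \<rho> | Some None \<Rightarrow> Gm | Some (Some i) \<Rightarrow> N i / 2)"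
      for \<kappa> :: "'d option option"
    define w where "w \<kappa> = (case \<kappa> of None \<Rightarrow> \<rho> | Some None \<Rightarrow> 1 | Some (Some i) \<Rightarrow> \<rho>)"
      for \<kappa> :: "'d option option"
    define K where "K = insert None (insert (Some None) (Some ` Some ` (J - {i0})))"
    define X where "X = {0..Q} \<times> {0..T}"
    have Gm0: "Gm \<ge> 0" unfolding Gm_def using \<delta>pos S0 T0 Npos[OF i0J] by simp
    have cardX: "real (card X) = (of_int Q + 1) * (of_int T + 1)"
      unfolding X_def using Q0 T0 by (simp add: card_cartesian_product)
    have cnt: "(\<Prod>\<kappa>\<in>K. (hi \<kappa> - lo \<kappa>) / w \<kappa> + 1) < real (card X)"
    proof -
      have inj: "inj_on (\<lambda>i. Some (Some i)) (J - {i0})" by (auto simp: inj_on_def)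
      define f where "f \<kappa> = (hi \<kappa> - lo \<kappa>) / w \<kappa> + 1" for \<kappa>
      have e1: "prod f K = f None * prod f (insert (Some None) (Some ` Some ` (J - {i0})))"
        unfolding K_def by (rule prod.insert) auto
      have e2: "prod f (insert (Some None) (Some ` Some ` (J - {i0}))) = f (Some None) * prod f (Some ` Some ` (J - {i0}))"
        by (rule prod.insert) auto
      have e3: "prod f (Some ` Some ` (J - {i0})) = (\<Prod>i\<in>J - {i0}. f (Some (Some i)))"
        unfolding image_image by (subst prod.reindex[OF inj]) (simp add: comp_def)
      have f1: "f None = 2" unfolding f_def hi_def lo_def w_def using \<rho>0 by simp
      have f2: "f (Some None) = 2 * Gm + 1" unfolding f_def hi_def lo_def w_def by simp
      have f3: "f (Some (Some i)) = N i / \<rho> + 1" for i unfolding f_def hi_def lo_def w_def by simp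
      have "(\<Prod>\<kappa>\<in>K. (hi \<kappa> - lo \<kappa>) / w \<kappa> + 1) = 2 * (2 * Gm + 1) * (\<Prod>i\<in>J - {i0}. N i / \<rho> + 1)"
        unfolding f_def[symmetric] e1 e2 e3 f1 f2 f3 by simp
      also have "\<dots> \<le> 2 * (2 * Gm + 1) * (\<Prod>i\<in>J - {i0}. 2 / \<rho> * N i)"
      proof (intro mult_left_mono prod_mono conjI)
        fix i assume i: "i \<in> J - {i0}"
        show "0 \<le> N i / \<rho> + 1" using Npos i \<rho>0 by (simp add: less_imp_le)
        have Ni: "N i \<ge> 1" using N i by auto
        have "1 \<le> N i / \<rho>" using Ni \<rho>0 \<rho>1 by (simp add: field_simps)
        thus "N i / \<rho> + 1 \<le> 2 / \<rho> * N i" by simp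
      qed (use Gm0 in simp)
      also have "(\<Prod>i\<in>J - {i0}. 2 / \<rho> * N i) = b * (P / N i0)"
      proof -
        have "(\<Prod>i\<in>J - {i0}. 2 / \<rho> * N i) = (2/\<rho>) ^ card (J - {i0}) * prod N (J - {i0})"
          by (simp only: prod.distrib prod_constant)
        moreover have "card (J - {i0}) = j - 1" unfolding j_def using i0J by simp
        moreover have "P = N i0 * prod N (J - {i0})" unfolding P_def using i0J
          by (simp add: prod.remove)
        ultimately show ?thesis unfolding b_def using Npos[OF i0J] by simp
      qed
      also have "2 * (2 * Gm + 1) * (b * (P / N i0)) \<le> \<rho> * P * (of_int T + 1)"
      proof -
        have key: "2 * b * (2 * Gm + 1) \<le> \<rho> * (of_int T + 1) * N i0"
        proof -
          have "2 * b * (2 * Gm) = 4 * b * \<delta> * (S + (of_int T + 1) * N i0 + 1)"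
            unfolding Gm_def by (simp add: algebra_simps)
          also have "\<dots> \<le> \<rho> / 8 * (S + (of_int T + 1) * N i0 + 1)"
            using b\<delta> S0 T0 Npos[OF i0J] by (intro mult_right_mono) auto
          also have "\<dots> \<le> \<rho> / 8 * (3 * ((of_int T + 1) * N i0))"
          proof (intro mult_left_mono)
            have "0 \<le> 4 * b / \<rho>" using b0 \<rho>0 by simp
            hence "S \<le> of_int T + 1" using Tge by linarith
            have tn0: "(of_int T + 1) * 1 \<le> (of_int T + 1) * N i0"
              using N[OF i0J] T0 by (intro mult_left_mono) auto
            hence tn: "(of_int T + 1) \<le> (of_int T + 1) * N i0" by simp
            have t1: "(1::real) \<le> of_int T + 1" using T0 by simp
            have s1: "S \<le> (of_int T + 1) * N i0" using tn \<open>S \<le> of_int T + 1\<close> by linarith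
            have s2: "1 \<le> (of_int T + 1) * N i0" using tn t1 by linarith
            show "S + (of_int T + 1) * N i0 + 1 \<le> 3 * ((of_int T + 1) * N i0)" using s1 s2 by linarith
          qed (use \<rho>0 in auto)
          also have "\<rho> / 8 * (3 * ((of_int T + 1) * N i0)) = 3/8 * (\<rho> * (of_int T + 1) * N i0)"
            by (simp add: algebra_simps)
          finally have A: "2 * b * (2 * Gm) \<le> 3/8 * (\<rho> * (of_int T + 1) * N i0)" .
          have "4 * b / \<rho> \<le> of_int T + 1" using Tge S0 by linarith
          hence "4 * b \<le> (of_int T + 1) * \<rho>" using \<rho>0 by (simp add: pos_divide_le_eq)
          hence "4 * b \<le> \<rho> * (of_int T + 1)" by (simp add: mult.commute)
          also have "\<dots> \<le> \<rho> * (of_int T + 1) * N i0"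
          proof -
            have x0: "0 \<le> \<rho> * (of_int T + 1)" using \<rho>0 T0 by simp
            have "\<rho> * (of_int T + 1) * 1 \<le> \<rho> * (of_int T + 1) * N i0"
              using x0 N[OF i0J] by (intro mult_left_mono) auto
            thus ?thesis by simp
          qed
          finally have B: "2 * b \<le> 1/2 * (\<rho> * (of_int T + 1) * N i0)" by linarith
          have "2 * b * (2 * Gm + 1) = 2 * b * (2 * Gm) + 2 * b" by (simp add: algebra_simps)
          also have "\<dots> \<le> 3/8 * (\<rho> * (of_int T + 1) * N i0) + 1/2 * (\<rho> * (of_int T + 1) * N i0)"
            using A B by linarith
          also have "\<dots> \<le> \<rho> * (of_int T + 1) * N i0"
          proof -
            have "0 \<le> \<rho> * (of_int T + 1) * N i0" using \<rho>0 T0 Npos[OF i0J] by simp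
            thus ?thesis by linarith
          qed
          finally show ?thesis .
        qed
        have "2 * (2 * Gm + 1) * (b * (P / N i0)) = (2 * b * (2 * Gm + 1)) * (P / N i0)"
          by (simp add: algebra_simps)
        also have "\<dots> \<le> (\<rho> * (of_int T + 1) * N i0) * (P / N i0)"
          using key Ppos Npos[OF i0J] by (intro mult_right_mono) auto
        also have "\<dots> = \<rho> * P * (of_int T + 1)" using Npos[OF i0J] by (simp add: field_simps)
        finally show ?thesis .
      qed
      also have "\<dots> < (of_int Q + 1) * (of_int T + 1)"
        using QP1 T0 by (intro mult_strict_right_mono) auto
      finally show ?thesis unfolding cardX .
    qed
    obtain x1 x2 where x12: "x1 \<in> X" "x2 \<in> X" "x1 \<noteq> x2"
      and cl: "\<And>\<kappa>. \<kappa> \<in> K \<Longrightarrow> \<bar>\<phi> x1 \<kappa> - \<phi> x2 \<kappa>\<bar> < w \<kappa>"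
    proof -
      have "\<exists>x\<in>X. \<exists>x'\<in>X. x \<noteq> x' \<and> (\<forall>\<kappa>\<in>K. \<bar>\<phi> x \<kappa> - \<phi> x' \<kappa>\<bar> < w \<kappa>)"
      proof (rule box_pigeon[OF _ _ _ _ _ cnt])
        show "finite X" unfolding X_def by simp
        show "finite K" unfolding K_def by simp
        fix x \<kappa> assume x: "x \<in> X" and k: "\<kappa> \<in> K"
        obtain q t where qt: "x = (q, t)" "q \<in> {0..Q}" "t \<in> {0..T}" using x unfolding X_def by auto
        have "0 \<le> of_int q / P" "of_int q / P \<le> \<rho>" using qt QP Ppos by (auto simp: field_simps)
        thus "lo \<kappa> \<le> \<phi> x \<kappa> \<and> \<phi> x \<kappa> \<le> hi \<kappa>"
          using k Gb[OF qt(2,3)] Fb2 qt(1) unfolding K_def lo_def hi_def \<phi>_def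
          by (auto simp: abs_le_iff)
      next
        fix \<kappa> assume k: "\<kappa> \<in> K"
        show "w \<kappa> > 0" using k \<rho>0 unfolding K_def w_def by auto
        show "lo \<kappa> \<le> hi \<kappa>" using k Gm0 Npos \<rho>0 unfolding K_def lo_def hi_def
          by (auto simp: less_imp_le)
      qed
      thus ?thesis using that by blast
    qed
    obtain q1 t1 q2 t2 where x1: "x1 = (q1, t1)" and x2: "x2 = (q2, t2)" by fastforce
    define q where "q = q1 - q2"
    define p where "p i = pp q1 t1 i - pp q2 t2 i" for i
    have Fd: "F q1 t1 i - F q2 t2 i = (of_int (p i) - of_int q * \<alpha> $ i) * N i" for i
      unfolding F_def p_def q_def by (simp add: algebra_simps)
    have Gd: "G q1 t1 - G q2 t2 = (\<Sum>i\<in>J. of_int (p i) * v $ Some i) + of_int q * v $ None"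
      unfolding G_def p_def q_def by (simp add: algebra_simps sum_subtractf)
    have "\<bar>G q1 t1 - G q2 t2\<bar> < 1" using cl[of "Some None"] unfolding K_def \<phi>_def w_def x1 x2 by simp
    hence G0: "(\<Sum>i\<in>J. of_int (p i) * v $ Some i) + of_int q * v $ None = 0"
      using Gd integ[of p q] Ints_small by metis
    have Fs: "\<bar>(of_int (p i) - of_int q * \<alpha> $ i) * N i\<bar> < \<rho>" if "i \<in> J" "i \<noteq> i0" for i
      using cl[of "Some (Some i)"] that unfolding K_def \<phi>_def w_def x1 x2 Fd[symmetric] by simp
    have "\<bar>of_int q1 / P - of_int q2 / P\<bar> < \<rho>" using cl[of None] unfolding K_def \<phi>_def w_def x1 x2 by simp
    hence "\<bar>of_int q / P\<bar> < \<rho>" unfolding q_def by (simp add: diff_divide_distrib)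
    hence qP: "\<bar>of_int q\<bar> < \<rho> * P"
    proof -
      assume h: "\<bar>of_int q / P\<bar> < \<rho>"
      have "\<bar>of_int q :: real\<bar> = \<bar>of_int q / P\<bar> * P" using Ppos by (simp add: abs_divide)
      also have "\<dots> < \<rho> * P" using h Ppos by (intro mult_strict_right_mono) auto
      finally show ?thesis .
    qed
    define E where "E i = (of_int (p i) - of_int q * \<alpha> $ i) * N i" for i
    have "0 = (\<Sum>i\<in>J. E i * z $ Some i) + (of_int q / P) * z $ None"
      using ident[of p q] G0 unfolding E_def by simp
    also have "(\<Sum>i\<in>J. E i * z $ Some i) = E i0 * z $ Some i0 + (\<Sum>i\<in>J - {i0}. E i * z $ Some i)"
      using i0J by (simp add: sum.remove)
    finally have "E i0 * z $ Some i0 = - ((\<Sum>i\<in>J - {i0}. E i * z $ Some i) + (of_int q / P) * z $ None)"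
      by linarith
    hence "\<bar>E i0 * z $ Some i0\<bar> = \<bar>(\<Sum>i\<in>J - {i0}. E i * z $ Some i) + (of_int q / P) * z $ None\<bar>"
      by (simp only: abs_minus_cancel)
    hence "\<bar>E i0\<bar> * \<delta> = \<bar>(\<Sum>i\<in>J - {i0}. E i * z $ Some i) + (of_int q / P) * z $ None\<bar>"
      by (simp only: abs_mult zi0)
    also have "\<dots> \<le> (\<Sum>i\<in>J - {i0}. \<rho> * \<delta>) + \<rho> * \<delta>"
    proof (rule order.trans[OF abs_triangle_ineq add_mono])
      show "\<bar>\<Sum>i\<in>J - {i0}. E i * z $ Some i\<bar> \<le> (\<Sum>i\<in>J - {i0}. \<rho> * \<delta>)"
      proof (rule order.trans[OF sum_abs sum_mono])
        fix i assume i: "i \<in> J - {i0}"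
        show "\<bar>E i * z $ Some i\<bar> \<le> \<rho> * \<delta>" unfolding abs_mult E_def
          using Fs[of i] i zle[of "Some i"] by (intro mult_mono) auto
      qed
      show "\<bar>(of_int q / P) * z $ None\<bar> \<le> \<rho> * \<delta>" unfolding abs_mult
        using \<open>\<bar>of_int q / P\<bar> < \<rho>\<close> zle[of None] \<rho>0 by (intro mult_mono) auto
    qed
    also have "\<dots> = (real j * \<rho>) * \<delta>"
    proof -
      have "card (J - {i0}) = j - 1" unfolding j_def using i0J by simp
      thus ?thesis using j1 by (simp add: algebra_simps of_nat_diff)
    qed
    finally have "\<bar>E i0\<bar> \<le> real j * \<rho>" using \<delta>pos by (simp only: mult_le_cancel_right_pos)
    hence Ei0: "\<bar>E i0\<bar> \<le> r" using jr \<rho>0 by linarith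
    show False
    proof (cases "q = 0")
      case True
      hence "q1 = q2" unfolding q_def by simp
      hence "t1 \<noteq> t2" using x12(3) x1 x2 by simp
      have "E i0 = of_int (t1 - t2) * N i0" unfolding E_def p_def pp_def using True \<open>q1 = q2\<close> by simp
      moreover have "(1::real) \<le> \<bar>of_int (t1 - t2)\<bar>"
      proof -
        have "1 \<le> \<bar>t1 - t2\<bar>" using \<open>t1 \<noteq> t2\<close> by linarith
        thus ?thesis by (metis of_int_1_le_iff of_int_abs)
      qed
      ultimately have "\<bar>E i0\<bar> \<ge> 1 * N i0"
      proof -
        assume e: "E i0 = of_int (t1 - t2) * N i0" and o: "(1::real) \<le> \<bar>of_int (t1 - t2)\<bar>"
        have "\<bar>E i0\<bar> = \<bar>of_int (t1 - t2)\<bar> * N i0" using e Npos[OF i0J] by (simp add: abs_mult)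
        moreover have "1 * N i0 \<le> \<bar>of_int (t1 - t2)\<bar> * N i0" using o Npos[OF i0J]
          by (intro mult_right_mono) auto
        ultimately show ?thesis by simp
      qed
      thus False using Ei0 N[OF i0J] r0 by linarith
    next
      case False
      show False
      proof (rule core_contra[OF bad N False _ _ r0(3) _])
        show "0 \<le> r" "r \<le> 1" using r0 by auto
        fix i assume i: "i \<in> J"
        show "\<bar>(of_int (p i) - of_int q * \<alpha> $ i) * N i\<bar> \<le> r"
        proof (cases "i = i0")
          case True thus ?thesis using Ei0 unfolding E_def by simp
        next
          case False thus ?thesis using Fs[OF i False] \<rho>0 by linarith
        qed
      next
        have "\<rho> * P \<le> r * P" using \<rho>0 Ppos by (intro mult_right_mono) auto
        thus "\<bar>of_int q\<bar> \<le> r * prod N J" using qP unfolding P_def by linarith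
      qed
    qed
  qed
qed

lemma countB1:
  fixes \<alpha> :: "real^'d" and J :: "'d set" and N :: "'d \<Rightarrow> real" and R :: real
  assumes N: "\<And>i. i \<in> J \<Longrightarrow> N i \<ge> 1" and R: "R \<ge> 1"
  shows "\<exists>S1. finite S1 \<and> (\<forall>z\<in>S1. \<exists>v. intg v \<and> z = zpt \<alpha> J N v) \<and> (\<forall>z\<in>S1. \<forall>l. \<bar>z $ l\<bar> \<le> R)
      \<and> R ^ (card J + 1) / 2 \<le> real (card S1)"
proof -
  define P where "P = prod N J"
  define j where "j = card J"
  define A where "A = PiE J (\<lambda>i. {0..\<lfloor>R * N i\<rfloor>})"
  define \<theta> where "\<theta> \<kappa> = (\<Sum>i\<in>J. of_int (\<kappa> i) * \<alpha> $ i)" for \<kappa> :: "'d \<Rightarrow> int"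
  define u where "u = nat \<lceil>R / P\<rceil>"
  define X where "X = A \<times> {0..<u}"
  define vl where "vl x = frac (\<theta> (fst x)) + real (snd x)" for x :: "('d \<Rightarrow> int) \<times> nat"
  define f where "f x = \<lfloor>vl x * P / R\<rfloor>" for x
  define C where "C = {0..\<lfloor>real u * P / R\<rfloor>}"
  have Npos: "N i > 0" if "i \<in> J" for i using N[OF that] by linarith
  have P1: "P \<ge> 1" unfolding P_def using N by (intro prod_ge_1) auto
  have Ppos: "P > 0" using P1 by linarith
  have R0: "R > 0" using R by linarith
  have uge: "real u \<ge> R / P" unfolding u_def by linarith
  have uP: "real u * P \<ge> R" using uge Ppos by (simp add: pos_divide_le_eq)
  have finA: "finite A" unfolding A_def by (intro finite_PiE) auto
  have finX: "finite X" unfolding X_def using finA by simp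
  have finC: "finite C" unfolding C_def by simp
  have vl0: "0 \<le> vl x" for x unfolding vl_def using frac_ge_0[of "\<theta> (fst x)"] by simp
  have vlu: "vl x \<le> real u" if "x \<in> X" for x
  proof -
    have "snd x < u" using that unfolding X_def by auto
    hence "real (snd x) + 1 \<le> real u" by linarith
    thus ?thesis unfolding vl_def using frac_lt_1[of "\<theta> (fst x)"] by linarith
  qed
  have fC: "f \<in> X \<rightarrow> C"
  proof
    fix x assume x: "x \<in> X"
    have "0 \<le> vl x * P / R" using vl0 Ppos R0 by simp
    moreover have "vl x * P / R \<le> real u * P / R" using vlu[OF x] Ppos R0
      by (intro divide_right_mono mult_right_mono) auto
    ultimately show "f x \<in> C" unfolding f_def C_def by (auto intro: floor_mono)
  qed
  have Cne: "C \<noteq> {}"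
  proof -
    have "0 \<le> real u * P / R" using Ppos R0 by simp
    hence "0 \<in> C" unfolding C_def by simp
    thus ?thesis by blast
  qed
  obtain y where y: "y \<in> C" "card X \<le> card (f -` {y} \<inter> X) * card C"
    using pigeonhole_card[OF fC finX finC Cne] by blast
  define Fib where "Fib = f -` {y} \<inter> X"
  have cardA: "real (card A) \<ge> R ^ j * P"
  proof -
    have "real (card A) = (\<Prod>i\<in>J. real (nat (\<lfloor>R * N i\<rfloor> + 1)))"
      unfolding A_def by (simp add: card_PiE)
    also have "\<dots> \<ge> (\<Prod>i\<in>J. R * N i)"
    proof (rule prod_mono)
      fix i assume i: "i \<in> J"
      have "0 \<le> R * N i" using R0 Npos[OF i] by simp
      hence "R * N i \<le> of_int (\<lfloor>R * N i\<rfloor> + 1)" by linarith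
      moreover have "0 \<le> \<lfloor>R * N i\<rfloor> + 1" using \<open>0 \<le> R * N i\<close> by linarith
      ultimately show "0 \<le> R * N i \<and> R * N i \<le> real (nat (\<lfloor>R * N i\<rfloor> + 1))"
        using \<open>0 \<le> R * N i\<close> by simp
    qed
    also have "(\<Prod>i\<in>J. R * N i) = R ^ j * P" unfolding j_def P_def
      by (simp only: prod.distrib prod_constant)
    finally show ?thesis .
  qed
  have cardX: "real (card X) = real (card A) * real u" unfolding X_def by (simp add: card_cartesian_product)
  have cardC: "real (card C) \<le> real u * P / R + 1"
  proof -
    have "0 \<le> real u * P / R" using Ppos R0 by simp
    hence "0 \<le> \<lfloor>real u * P / R\<rfloor> + 1" by linarith
    hence "real (card C) = of_int (\<lfloor>real u * P / R\<rfloor> + 1)" unfolding C_def by simp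
    thus ?thesis by linarith
  qed
  have cardF: "R ^ (j + 1) / 2 \<le> real (card Fib)"
  proof (rule ccontr)
    assume "\<not> ?thesis"
    hence lt: "real (card Fib) < R ^ (j + 1) / 2" by simp
    have "0 \<le> real u * P / R" using Ppos R0 by simp
    hence Cpos: "0 < real u * P / R + 1" by linarith
    have "R ^ j * P * real u \<le> real (card X)" using cardA cardX
      by (simp add: mult_right_mono)
    also have "\<dots> \<le> real (card Fib) * real (card C)" using y(2) unfolding Fib_def
      by (simp only: of_nat_mult[symmetric] of_nat_le_iff)
    also have "\<dots> \<le> real (card Fib) * (real u * P / R + 1)" using cardC by (intro mult_left_mono) auto
    also have "\<dots> < R ^ (j + 1) / 2 * (real u * P / R + 1)" using lt Cpos by (intro mult_strict_right_mono)
    also have "\<dots> = R ^ j * (real u * P + R) / 2" using R0 by (simp add: field_simps)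
    also have "\<dots> \<le> R ^ j * (real u * P + real u * P) / 2" using uP R0
      by (intro divide_right_mono mult_left_mono) (auto simp: mult.commute)
    also have "\<dots> = R ^ j * P * real u" by (simp add: algebra_simps)
    finally show False by simp
  qed
  have Fne: "Fib \<noteq> {}"
  proof
    assume "Fib = {}"
    hence "real (card Fib) = 0" by simp
    moreover have "0 < R ^ (j + 1) / 2" using R0 by simp
    ultimately show False using cardF by linarith
  qed
  then obtain x0 where x0: "x0 \<in> Fib" by auto
  define V where "V x = ((\<chi> l. case l of Some i \<Rightarrow> (if i \<in> J then of_int (fst x i - fst x0 i) else 0)
     | None \<Rightarrow> of_int ((int (snd x) - \<lfloor>\<theta> (fst x)\<rfloor>) - (int (snd x0) - \<lfloor>\<theta> (fst x0)\<rfloor>))) :: real^'d option)" for x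
  define g where "g x = zpt \<alpha> J N (V x)" for x
  have gSome: "g x $ Some i = (if i \<in> J then of_int (fst x i - fst x0 i) / N i else 0)" for x i
    unfolding g_def V_def by simp
  have gNone: "g x $ None = (vl x - vl x0) * P" for x
  proof -
    have h: "(\<Sum>i\<in>J. (V x) $ Some i * \<alpha> $ i) = \<theta> (fst x) - \<theta> (fst x0)"
      unfolding V_def \<theta>_def by (simp add: sum_subtractf left_diff_distrib)
    have vn: "V x $ None = of_int ((int (snd x) - \<lfloor>\<theta> (fst x)\<rfloor>) - (int (snd x0) - \<lfloor>\<theta> (fst x0)\<rfloor>))"
      unfolding V_def by simp
    have "g x $ None = ((\<theta> (fst x) - \<theta> (fst x0)) + V x $ None) * P"
      unfolding g_def zpt_None P_def h ..
    also have "\<dots> = (vl x - vl x0) * P" unfolding vn vl_def frac_def by (simp add: algebra_simps)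
    finally show ?thesis .
  qed
  have Fib_sub: "Fib \<subseteq> X" unfolding Fib_def by auto
  have fy: "f x = y" if "x \<in> Fib" for x using that unfolding Fib_def by auto
  have inj: "inj_on g Fib"
  proof (rule inj_onI)
    fix x x' assume xx: "x \<in> Fib" "x' \<in> Fib" "g x = g x'"
    have A1: "fst x \<in> A" "fst x' \<in> A" using xx Fib_sub unfolding X_def by auto
    have "fst x i = fst x' i" if "i \<in> J" for i
    proof -
      have "g x $ Some i = g x' $ Some i" using xx by simp
      hence "of_int (fst x i - fst x0 i) / N i = (of_int (fst x' i - fst x0 i) / N i :: real)"
        using that by (simp add: gSome)
      hence "of_int (fst x i - fst x0 i) = (of_int (fst x' i - fst x0 i) :: real)"
        using Npos[OF that] by (simp add: divide_cancel_right)
      thus ?thesis by simp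
    qed
    hence k: "fst x = fst x'" using A1 unfolding A_def by (intro PiE_ext) auto
    have "g x $ None = g x' $ None" using xx by simp
    hence "vl x = vl x'" using Ppos by (simp add: gNone)
    hence "snd x = snd x'" unfolding vl_def k by simp
    thus "x = x'" using k by (simp add: prod_eq_iff)
  qed
  show ?thesis
  proof (intro exI[of _ "g ` Fib"] conjI ballI allI)
    show "finite (g ` Fib)" using finX Fib_sub by (auto intro: finite_subset)
    show "R ^ (card J + 1) / 2 \<le> real (card (g ` Fib))" using cardF card_image[OF inj] j_def by simp
  next
    fix z assume "z \<in> g ` Fib"
    then obtain x where x: "x \<in> Fib" "z = g x" by auto
    show "\<exists>v. intg v \<and> z = zpt \<alpha> J N v" unfolding x(2) g_def
      by (intro exI[of _ "V x"]) (auto simp: intg_def V_def split: option.split)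
  next
    fix z l assume "z \<in> g ` Fib"
    then obtain x where x: "x \<in> Fib" "z = g x" by auto
    have xX: "x \<in> X" "x0 \<in> X" using x(1) x0 Fib_sub by auto
    show "\<bar>z $ l\<bar> \<le> R"
    proof (cases l)
      case None
      have "f x = f x0" using fy x(1) x0 by simp
      hence "\<bar>vl x * P / R - vl x0 * P / R\<bar> < 1" unfolding f_def by (rule floor_eq_diff)
      hence "\<bar>(vl x - vl x0) * P / R\<bar> < 1" by (simp add: diff_divide_distrib left_diff_distrib)
      hence "\<bar>(vl x - vl x0) * P\<bar> < R" using R0 by (simp add: abs_divide)
      thus ?thesis unfolding x(2) None gNone by simp
    next
      case (Some i)
      show ?thesis
      proof (cases "i \<in> J")
        case False thus ?thesis unfolding x(2) Some gSome using R0 by simp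
      next
        case True
        have m: "fst x i \<in> {0..\<lfloor>R * N i\<rfloor>}" "fst x0 i \<in> {0..\<lfloor>R * N i\<rfloor>}"
          using xX True unfolding X_def A_def by auto
        hence "\<bar>fst x i - fst x0 i\<bar> \<le> \<lfloor>R * N i\<rfloor>" by auto
        hence "of_int \<bar>fst x i - fst x0 i\<bar> \<le> (of_int \<lfloor>R * N i\<rfloor> :: real)"
          by (simp only: of_int_le_iff)
        hence "\<bar>of_int (fst x i - fst x0 i)\<bar> \<le> R * N i"
          using of_int_floor_le[of "R * N i"] by (simp only: of_int_abs)
        hence "\<bar>of_int (fst x i - fst x0 i)\<bar> / N i \<le> R" using Npos[OF True]
          by (simp add: pos_divide_le_eq)
        thus ?thesis unfolding x(2) Some gSome using True Npos[OF True] by (simp add: abs_divide)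
      qed
    qed
  qed
qed

lemma spanB2:
  fixes \<alpha> :: "real^'d" and J :: "'d set" and N :: "'d \<Rightarrow> real" and S1 :: "(real^'d option) set"
  assumes sep: "\<And>v. intg v \<Longrightarrow> zpt \<alpha> J N v \<noteq> 0 \<Longrightarrow> \<exists>l. c1 \<le> \<bar>zpt \<alpha> J N v $ l\<bar>"
    and c1: "0 < c1"
    and S1lat: "\<forall>z\<in>S1. \<exists>v. intg v \<and> z = zpt \<alpha> J N v"
    and fin: "finite S1"
    and bnd: "\<forall>z\<in>S1. \<forall>l. \<bar>z $ l\<bar> \<le> R"
    and cnt: "(2 * R * (real (card J) + 1) / c1 + 1) ^ card J < real (card S1)"
    and R0: "R \<ge> 0"
  shows "{u. \<forall>i. i \<notin> J \<longrightarrow> u $ Some i = 0} \<subseteq> span S1"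
proof
  fix u :: "real^'d option" assume u: "u \<in> {u. \<forall>i. i \<notin> J \<longrightarrow> u $ Some i = 0}"
  show "u \<in> span S1"
  proof (rule ccontr)
    assume nu: "u \<notin> span S1"
    obtain y w where y: "y \<in> span S1" and orth: "\<And>x. x \<in> span S1 \<Longrightarrow> orthogonal w x" and uyw: "u = y + w"
      by (rule orthogonal_subspace_decomp_exists[of S1 u]) blast
    have wnz: "w \<noteq> 0" using nu y uyw by auto
    have yJ: "y $ Some i = 0" if "i \<notin> J" for i
    proof -
      have "subspace {x :: real^'d option. x $ Some i = 0}" by (auto simp: subspace_def)
      moreover have "S1 \<subseteq> {x. x $ Some i = 0}" using S1lat that by auto
      ultimately have "span S1 \<subseteq> {x. x $ Some i = 0}" by (rule span_minimal[rotated])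
      thus ?thesis using y by auto
    qed
    have wJ: "w $ Some i = 0" if "i \<notin> J" for i
    proof -
      have "u $ Some i = 0" using u that by simp
      hence "y $ Some i + w $ Some i = 0" using uyw by simp
      thus ?thesis using yJ[OF that] by simp
    qed
    obtain l0 where l0: "\<And>l. \<bar>w $ l\<bar> \<le> \<bar>w $ l0\<bar>"
    proof -
      have "Max (range (\<lambda>l. \<bar>w $ l\<bar>)) \<in> range (\<lambda>l. \<bar>w $ l\<bar>)" by (intro Max_in) auto
      then obtain l0 where "Max (range (\<lambda>l. \<bar>w $ l\<bar>)) = \<bar>w $ l0\<bar>" by (elim rangeE)
      moreover have "\<bar>w $ l\<bar> \<le> Max (range (\<lambda>l. \<bar>w $ l\<bar>))" for l by (intro Max_ge) auto
      ultimately show ?thesis using that by metis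
    qed
    have wl0: "w $ l0 \<noteq> 0"
    proof
      assume "w $ l0 = 0"
      hence "w $ l = 0" for l using l0[of l] by simp
      thus False using wnz by (simp add: vec_eq_iff)
    qed
    define Kall where "Kall = insert None (Some ` J)"
    have l0K: "l0 \<in> Kall"
    proof (cases l0)
      case (Some i) thus ?thesis using wl0 wJ unfolding Kall_def by (cases "i \<in> J") auto
    qed (simp add: Kall_def)
    define K where "K = Kall - {l0}"
    have cardKall: "card Kall = card J + 1" unfolding Kall_def
      by (simp add: card_image)
    have cardK: "card K = card J" unfolding K_def using l0K cardKall by simp
    define s where "s = c1 / (real (card J) + 1)"
    have s0: "s > 0" unfolding s_def using c1 by simp
    have cnt2: "(\<Prod>\<kappa>\<in>K. (R - - R) / s + 1) < real (card S1)"
    proof -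
      have "(\<Prod>\<kappa>\<in>K. (R - - R) / s + 1) = (2 * R * (real (card J) + 1) / c1 + 1) ^ card J"
        unfolding prod_constant cardK s_def by (simp add: field_simps)
      thus ?thesis using cnt by simp
    qed
    obtain z z' where zz: "z \<in> S1" "z' \<in> S1" "z \<noteq> z'" and cl: "\<And>l. l \<in> K \<Longrightarrow> \<bar>z $ l - z' $ l\<bar> < s"
    proof -
      have "\<exists>x\<in>S1. \<exists>x'\<in>S1. x \<noteq> x' \<and> (\<forall>\<kappa>\<in>K. \<bar>x $ \<kappa> - x' $ \<kappa>\<bar> < s)"
      proof (rule box_pigeon[OF fin _ _ _ _ cnt2, where \<phi> = "\<lambda>x l. x $ l"])
        show "finite K" by simp
        fix x \<kappa> assume "x \<in> S1"
        hence "\<bar>x $ \<kappa>\<bar> \<le> R" using bnd by blast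
        thus "- R \<le> x $ \<kappa> \<and> x $ \<kappa> \<le> R" by (simp add: abs_le_iff)
      qed (use s0 R0 in auto)
      thus ?thesis using that by blast
    qed
    obtain v v' where v: "intg v" "z = zpt \<alpha> J N v" and v': "intg v'" "z' = zpt \<alpha> J N v'"
      using S1lat zz by metis
    define d where "d = z - z'"
    have dlat: "d = zpt \<alpha> J N (v - v')" unfolding d_def v(2) v'(2) zpt_diff ..
    have dnz: "zpt \<alpha> J N (v - v') \<noteq> 0"
    proof
      assume "zpt \<alpha> J N (v - v') = 0"
      hence "z - z' = 0" using dlat d_def by simp
      thus False using zz(3) by simp
    qed
    obtain l1 where l1: "c1 \<le> \<bar>d $ l1\<bar>" using sep[OF intg_diff[OF v(1) v'(1)] dnz] dlat by auto
    have dout: "d $ l = 0" if "l \<notin> Kall" for l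
    proof -
      show ?thesis
      proof (cases l)
        case None thus ?thesis using that unfolding Kall_def by simp
      next
        case (Some i)
        hence "i \<notin> J" using that unfolding Kall_def by auto
        thus ?thesis unfolding dlat Some by simp
      qed
    qed
    have dK: "\<bar>d $ l\<bar> < s" if "l \<in> K" for l using cl[OF that] unfolding d_def by simp
    have "w \<bullet> d = 0" unfolding d_def using orth[of z] orth[of z'] zz span_base[of z S1] span_base[of z' S1]
      by (simp add: orthogonal_def inner_diff_right)
    hence "(\<Sum>l\<in>UNIV. w $ l * d $ l) = 0" by (simp add: inner_vec_def)
    moreover have "(\<Sum>l\<in>UNIV. w $ l * d $ l) = (\<Sum>l\<in>Kall. w $ l * d $ l)"
      by (rule sum.mono_neutral_right) (auto simp: dout)
    moreover have "(\<Sum>l\<in>Kall. w $ l * d $ l) = w $ l0 * d $ l0 + (\<Sum>l\<in>K. w $ l * d $ l)"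
      unfolding K_def using l0K by (simp add: sum.remove)
    ultimately have e: "w $ l0 * d $ l0 = - (\<Sum>l\<in>K. w $ l * d $ l)" by linarith
    have "\<bar>w $ l0 * d $ l0\<bar> = \<bar>- (\<Sum>l\<in>K. w $ l * d $ l)\<bar>" using e by (rule arg_cong)
    hence "\<bar>w $ l0\<bar> * \<bar>d $ l0\<bar> = \<bar>\<Sum>l\<in>K. w $ l * d $ l\<bar>" by (simp only: abs_mult abs_minus_cancel)
    also have "\<dots> \<le> (\<Sum>l\<in>K. \<bar>w $ l0\<bar> * s)"
    proof (rule order.trans[OF sum_abs sum_mono])
      fix l assume "l \<in> K"
      show "\<bar>w $ l * d $ l\<bar> \<le> \<bar>w $ l0\<bar> * s" unfolding abs_mult
        using l0[of l] dK[OF \<open>l \<in> K\<close>] by (intro mult_mono) auto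
    qed
    also have "\<dots> = \<bar>w $ l0\<bar> * (real (card J) * s)" unfolding cardK[symmetric] by simp
    finally have "\<bar>d $ l0\<bar> \<le> real (card J) * s" using wl0 by (simp add: mult_le_cancel_left_pos)
    also have "\<dots> < c1" unfolding s_def using c1 by (simp add: field_simps)
    finally have dl0: "\<bar>d $ l0\<bar> < c1" .
    have "\<bar>d $ l\<bar> < c1" for l
    proof -
      have "s \<le> c1" unfolding s_def using c1 by (simp add: field_simps)
      show ?thesis
      proof (cases "l \<in> Kall")
        case True
        show ?thesis
        proof (cases "l = l0")
          case True thus ?thesis using dl0 by simp
        next
          case False thus ?thesis using dK[of l] \<open>l \<in> Kall\<close> \<open>s \<le> c1\<close> unfolding K_def by force
        qed
      qed (use dout c1 in simp)
    qed
    thus False using l1 by (meson not_le)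
  qed
qed

lemma coverC:
  fixes \<alpha> :: "real^'d" and J :: "'d set" and N :: "'d \<Rightarrow> real" and S1 :: "(real^'d option) set"
  assumes sub: "{u. \<forall>i. i \<notin> J \<longrightarrow> u $ Some i = 0} \<subseteq> span S1"
    and S1lat: "\<forall>z\<in>S1. \<exists>v. intg v \<and> z = zpt \<alpha> J N v"
    and bnd: "\<forall>z\<in>S1. \<forall>l. \<bar>z $ l\<bar> \<le> R"
    and u: "\<forall>i. i \<notin> J \<longrightarrow> u $ Some i = 0"
    and R0: "0 \<le> R"
  shows "\<exists>v. intg v \<and> (\<forall>l. \<bar>zpt \<alpha> J N v $ l - u $ l\<bar> \<le> real CARD('d option) * R)"
proof -
  obtain B where B: "B \<subseteq> S1" "independent B" "S1 \<subseteq> span B"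
    by (rule maximal_independent_subset)
  have finB: "finite B" and cardB: "card B \<le> CARD('d option)"
    using independent_bound[OF B(2)] by auto
  have "u \<in> span S1" using sub u by auto
  also have "span S1 \<subseteq> span B" using B(3) by (metis span_span span_mono)
  finally have "u \<in> span B" .
  then obtain c where c: "u = (\<Sum>b\<in>B. c b *\<^sub>R b)" unfolding span_finite[OF finB] by auto
  define vb where "vb b = (SOME v. intg v \<and> b = zpt \<alpha> J N v)" for b
  have vb: "intg (vb b) \<and> b = zpt \<alpha> J N (vb b)" if "b \<in> B" for b
    unfolding vb_def by (rule someI_ex) (use S1lat B(1) that in auto)
  define v where "v = (\<Sum>b\<in>B. of_int \<lfloor>c b\<rfloor> *\<^sub>R vb b)"
  have zv: "zpt \<alpha> J N v = (\<Sum>b\<in>B. of_int \<lfloor>c b\<rfloor> *\<^sub>R b)"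
  proof -
    have "zpt \<alpha> J N v = (\<Sum>b\<in>B. of_int \<lfloor>c b\<rfloor> *\<^sub>R zpt \<alpha> J N (vb b))"
      unfolding v_def by (simp add: linear_sum[OF zpt_linear] linear_cmul[OF zpt_linear])
    also have "\<dots> = (\<Sum>b\<in>B. of_int \<lfloor>c b\<rfloor> *\<^sub>R b)" using vb by (intro sum.cong) auto
    finally show ?thesis .
  qed
  have iv: "intg v" unfolding intg_def v_def
  proof
    fix l show "(\<Sum>b\<in>B. of_int \<lfloor>c b\<rfloor> *\<^sub>R vb b) $ l \<in> \<int>"
      unfolding sum_component using vb unfolding intg_def by (intro Ints_sum) auto
  qed
  show ?thesis
  proof (intro exI[of _ v] conjI iv allI)
    fix l
    have "zpt \<alpha> J N v $ l - u $ l = (\<Sum>b\<in>B. (of_int \<lfloor>c b\<rfloor> - c b) * b $ l)"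
      unfolding zv c sum_component by (simp add: sum_subtractf left_diff_distrib)
    also have "\<bar>\<dots>\<bar> \<le> (\<Sum>b\<in>B. 1 * R)"
    proof (rule order.trans[OF sum_abs sum_mono])
      fix b assume b: "b \<in> B"
      have "\<bar>of_int \<lfloor>c b\<rfloor> - c b\<bar> \<le> 1" by linarith
      moreover have "\<bar>b $ l\<bar> \<le> R" using bnd B(1) b by auto
      ultimately show "\<bar>(of_int \<lfloor>c b\<rfloor> - c b) * b $ l\<bar> \<le> 1 * R" unfolding abs_mult
        by (intro mult_mono) auto
    qed
    also have "\<dots> = real (card B) * R" by simp
    also have "\<dots> \<le> real CARD('d option) * R"
    proof (cases "B = {}")
      case True thus ?thesis using R0 by simp
    next
      case False
      then obtain b where "b \<in> B" by auto
      hence "0 \<le> R" using bnd B(1) by (meson abs_ge_zero order.trans subsetD)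
      thus ?thesis using cardB by (intro mult_right_mono) auto
    qed
    finally show "\<bar>zpt \<alpha> J N v $ l - u $ l\<bar> \<le> real CARD('d option) * R" .
  qed
qed

lemma cov:
  fixes \<alpha> :: "real^'d" and J :: "'d set"
  assumes c0: "c0 > 0"
    and bad: "\<And>q::int. q \<noteq> 0 \<Longrightarrow> c0 \<le> \<bar>of_int q\<bar> * (\<Prod>i\<in>J. dZ (of_int q * \<alpha> $ i))"
  shows "\<exists>Rc\<ge>0. \<forall>N. (\<forall>i\<in>J. N i \<ge> 1) \<longrightarrow> (\<forall>u. (\<forall>i. i \<notin> J \<longrightarrow> u $ Some i = 0) \<longrightarrow>
            (\<exists>v. intg v \<and> (\<forall>l. \<bar>zpt \<alpha> J N v $ l - u $ l\<bar> \<le> Rc)))"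
proof -
  define j where "j = card J"
  define \<rho> where "\<rho> = min (1/2) (c0/2) / (real j + 1)"
  define c1 where "c1 = \<rho> ^ (j + 1) / (32 * 3 ^ j)"
  define M where "M = (3 * (real j + 1) / c1) ^ j"
  define R where "R = 2 * M + 1"
  have \<rho>0: "0 < \<rho>" "\<rho> \<le> 1" unfolding \<rho>_def using c0 by (auto simp: field_simps)
  have c10: "0 < c1" unfolding c1_def using \<rho>0 by simp
  have c11: "c1 \<le> 1"
  proof -
    have "\<rho> ^ (j + 1) \<le> 1" using \<rho>0 by (intro power_le_one) auto
    moreover have "(1::real) \<le> 32 * 3 ^ j"
    proof -
      have "(1::real) \<le> 3 ^ j" by (rule one_le_power) simp
      thus ?thesis by linarith
    qed
    ultimately show ?thesis unfolding c1_def by (simp add: divide_le_eq_1)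
  qed
  have M0: "M \<ge> 0" unfolding M_def using c10 by simp
  have R1: "R \<ge> 1" unfolding R_def using M0 by simp
  show ?thesis
  proof (intro exI[of _ "real CARD('d option) * R"] conjI allI impI)
    show "0 \<le> real CARD('d option) * R" using R1 by simp
    fix N :: "'d \<Rightarrow> real" and u :: "real^'d option"
    assume N: "\<forall>i\<in>J. N i \<ge> 1" and u: "\<forall>i. i \<notin> J \<longrightarrow> u $ Some i = 0"
    have Nf: "\<And>i. i \<in> J \<Longrightarrow> N i \<ge> 1" using N by auto
    have sep: "\<exists>l. c1 \<le> \<bar>zpt \<alpha> J N v $ l\<bar>" if "intg v" "zpt \<alpha> J N v \<noteq> 0" for v
      using stepA[OF c0 bad Nf that] unfolding c1_def \<rho>_def j_def by simp
    obtain S1 where S1: "finite S1" "\<forall>z\<in>S1. \<exists>v. intg v \<and> z = zpt \<alpha> J N v"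
      "\<forall>z\<in>S1. \<forall>l. \<bar>z $ l\<bar> \<le> R" "R ^ (card J + 1) / 2 \<le> real (card S1)"
      using countB1[of J N R \<alpha>] N R1 by auto
    have cnt: "(2 * R * (real (card J) + 1) / c1 + 1) ^ card J < real (card S1)"
    proof -
      have "1 \<le> R * (real j + 1) / c1"
      proof -
        have "1 * 1 \<le> R * (real j + 1)" using R1 by (intro mult_mono) auto
        also have "\<dots> \<le> R * (real j + 1) / c1" using c10 c11 R1
          by (simp add: le_divide_eq mult_le_cancel_left1)
        finally show ?thesis by simp
      qed
      moreover have "2 * R * (real j + 1) / c1 = 2 * (R * (real j + 1) / c1)" by simp
      moreover have "R * (3 * (real j + 1) / c1) = 3 * (R * (real j + 1) / c1)" by simp
      ultimately have "2 * R * (real j + 1) / c1 + 1 \<le> R * (3 * (real j + 1) / c1)" by linarith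
      hence "(2 * R * (real j + 1) / c1 + 1) ^ j \<le> (R * (3 * (real j + 1) / c1)) ^ j"
        using R1 c10 by (intro power_mono) (auto intro: add_nonneg_nonneg)
      also have "\<dots> = R ^ j * M" unfolding M_def by (rule power_mult_distrib)
      also have "\<dots> < R ^ j * (R / 2)" using R1 unfolding R_def by simp
      also have "\<dots> = R ^ (j + 1) / 2" by simp
      finally show ?thesis using S1(4) unfolding j_def by linarith
    qed
    have sub: "{u. \<forall>i. i \<notin> J \<longrightarrow> u $ Some i = 0} \<subseteq> span S1"
      by (rule spanB2[OF sep c10 S1(2) S1(1) S1(3) cnt]) (use R1 in auto)
    show "\<exists>v. intg v \<and> (\<forall>l. \<bar>zpt \<alpha> J N v $ l - u $ l\<bar> \<le> real CARD('d option) * R)"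
      by (rule coverC[OF sub S1(2) S1(3) u]) (use R1 in auto)
  qed
qed

lemma diagm_entry[simp]: "diagm t $ i $ j = (if i = j then t i else 0)"
  by (simp add: diagm_def)

lemma sum_delta_mult: "(\<Sum>k\<in>UNIV. (if i = k then a else 0) * f k) = (a::real) * f (i::'n::finite)"
proof -
  have "(\<Sum>k\<in>UNIV. (if i = k then a else 0) * f k) = (\<Sum>k\<in>UNIV. if k = i then a * f k else 0)"
    by (intro sum.cong) auto
  also have "\<dots> = a * f i" by simp
  finally show ?thesis .
qed

lemma sum_delta_mult2: "(\<Sum>k\<in>UNIV. f k * (if k = j then a else 0)) = f (j::'n::finite) * (a::real)"
proof -
  have "(\<Sum>k\<in>UNIV. f k * (if k = j then a else 0)) = (\<Sum>k\<in>UNIV. if k = j then f k * a else 0)"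
    by (intro sum.cong) auto
  also have "\<dots> = f j * a" by simp
  finally show ?thesis .
qed

lemma diagm_mult: "diagm a ** diagm b = diagm (\<lambda>i. a i * b i)"
  unfolding matrix_matrix_mult_def
  by (simp add: vec_eq_iff diagm_def sum_delta_mult)

lemma diagm_one: "diagm (\<lambda>i. 1) = mat 1"
  by (simp add: vec_eq_iff diagm_def mat_def)

lemma matrix_inv_diagm:
  assumes "\<And>i. t i \<noteq> 0"
  shows "matrix_inv (diagm t) = diagm (\<lambda>i. 1 / t i)"
proof -
  define A where "A = diagm t"
  define B where "B = diagm (\<lambda>i. 1 / t i)"
  have AB: "A ** B = mat 1" unfolding A_def B_def diagm_mult using assms by (simp add: diagm_one[symmetric])
  have BA: "B ** A = mat 1" unfolding A_def B_def diagm_mult using assms by (simp add: diagm_one[symmetric])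
  have "\<exists>A'. A ** A' = mat 1 \<and> A' ** A = mat 1" using AB BA by blast
  hence inv: "A ** matrix_inv A = mat 1 \<and> matrix_inv A ** A = mat 1"
    unfolding matrix_inv_def by (rule someI_ex)
  have "matrix_inv A = matrix_inv A ** (A ** B)" using AB by (simp add: matrix_mul_rid)
  also have "\<dots> = (matrix_inv A ** A) ** B" by (simp add: matrix_mul_assoc)
  also have "\<dots> = B" using inv by (simp add: matrix_mul_lid)
  finally show ?thesis unfolding A_def B_def .
qed

lemma sum_option_UNIV: "(\<Sum>k\<in>(UNIV :: 'n::finite option set). f k) = f None + (\<Sum>i\<in>UNIV. f (Some i))"
proof -
  have "(\<Sum>k\<in>(UNIV :: 'n option set). f k) = (\<Sum>k\<in>insert None (range Some). f k)"
    by (simp only: UNIV_option_conv)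
  also have "\<dots> = f None + (\<Sum>k\<in>range Some. f k)" by (rule sum.insert) auto
  also have "(\<Sum>k\<in>range Some. f k) = (\<Sum>i\<in>UNIV. f (Some i))"
    by (subst sum.reindex) (auto simp: inj_on_def)
  finally show ?thesis .
qed

lemma Mrow:
  fixes \<alpha> :: "real^'d" and t :: "'d \<Rightarrow> real" and V :: "real^'d option"
  assumes t: "\<And>i. t i \<noteq> 0"
  shows "(V v* (block (mat 1) \<alpha> 0 1 ** block (matrix_inv (diagm t)) 0 0 (det (diagm t)))) $ Some j = V $ Some j / t j"
    and "(V v* (block (mat 1) \<alpha> 0 1 ** block (matrix_inv (diagm t)) 0 0 (det (diagm t)))) $ None
          = ((\<Sum>i\<in>UNIV. V $ Some i * \<alpha> $ i) + V $ None) * (\<Prod>i\<in>UNIV. t i)"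
proof -
  define M where "M = block (mat 1) \<alpha> 0 1 ** block (matrix_inv (diagm t)) 0 0 (det (diagm t))"
  have dt: "det (diagm t) = (\<Prod>i\<in>UNIV. t i)" by (subst det_diagonal) auto
  have Mi: "matrix_inv (diagm t) = diagm (\<lambda>i. 1 / t i)" using t by (rule matrix_inv_diagm)
  have M1: "M $ Some i $ Some j = (if i = j then 1 / t i else 0)" for i j
    unfolding M_def matrix_matrix_mult_def Mi
    by (simp add: sum_option_UNIV block_def mat_def sum_delta_mult)
  have M2: "M $ Some i $ None = \<alpha> $ i * (\<Prod>i\<in>UNIV. t i)" for i
    unfolding M_def matrix_matrix_mult_def Mi dt
    by (simp add: sum_option_UNIV block_def mat_def)
  have M3: "M $ None $ Some j = 0" for j
    unfolding M_def matrix_matrix_mult_def Mi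
    by (simp add: sum_option_UNIV block_def)
  have M4: "M $ None $ None = (\<Prod>i\<in>UNIV. t i)"
    unfolding M_def matrix_matrix_mult_def Mi dt
    by (simp add: sum_option_UNIV block_def)
  show "(V v* (block (mat 1) \<alpha> 0 1 ** block (matrix_inv (diagm t)) 0 0 (det (diagm t)))) $ Some j = V $ Some j / t j"
    unfolding M_def[symmetric] vector_matrix_mult_def
    by (simp add: sum_option_UNIV M1 M3 sum_delta_mult2 if_distrib cong: if_cong)
  show "(V v* (block (mat 1) \<alpha> 0 1 ** block (matrix_inv (diagm t)) 0 0 (det (diagm t)))) $ None
          = ((\<Sum>i\<in>UNIV. V $ Some i * \<alpha> $ i) + V $ None) * (\<Prod>i\<in>UNIV. t i)"
  proof -
    have "(\<Sum>i\<in>UNIV. M $ Some i $ None * V $ Some i) = (\<Sum>i\<in>UNIV. V $ Some i * \<alpha> $ i) * (\<Prod>i\<in>UNIV. t i)"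
      unfolding M2 sum_distrib_right by (rule sum.cong) (auto simp: mult_ac)
    thus ?thesis unfolding M_def[symmetric] vector_matrix_mult_def
      by (simp add: sum_option_UNIV M4 algebra_simps)
  qed
qed

lemma finite_int_box: "finite {V :: real^'n::finite. (\<forall>l. V $ l \<in> \<int>) \<and> (\<forall>l. \<bar>V $ l\<bar> \<le> C)}"
proof -
  have sub: "{V :: real^'n. (\<forall>l. V $ l \<in> \<int>) \<and> (\<forall>l. \<bar>V $ l\<bar> \<le> C)}
      \<subseteq> (\<lambda>f. \<chi> l. of_int (f l)) ` (PiE UNIV (\<lambda>_. {-\<lceil>C\<rceil>..\<lceil>C\<rceil>}))"
  proof
    fix V :: "real^'n" assume V: "V \<in> {V. (\<forall>l. V $ l \<in> \<int>) \<and> (\<forall>l. \<bar>V $ l\<bar> \<le> C)}"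
    define f where "f l = \<lfloor>V $ l\<rfloor>" for l
    have Vf: "V $ l = of_int (f l)" for l using V unfolding f_def by (auto elim!: Ints_cases)
    have "f l \<in> {-\<lceil>C\<rceil>..\<lceil>C\<rceil>}" for l
    proof -
      have "\<bar>V $ l\<bar> \<le> C" using V by auto
      hence "\<bar>of_int (f l) :: real\<bar> \<le> C" using Vf[of l] by simp
      thus ?thesis by (simp add: abs_le_iff) linarith
    qed
    moreover have "V = (\<chi> l. of_int (f l))" using Vf by (simp add: vec_eq_iff)
    ultimately show "V \<in> (\<lambda>f. \<chi> l. of_int (f l)) ` (PiE UNIV (\<lambda>_. {-\<lceil>C\<rceil>..\<lceil>C\<rceil>}))"
      by (intro image_eqI[of _ _ f]) auto
  qed
  have fin: "finite (PiE (UNIV :: 'n set) (\<lambda>_. {-\<lceil>C\<rceil>..\<lceil>C\<rceil>}))" by (intro finite_PiE) auto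
  show ?thesis by (rule finite_subset[OF sub finite_imageI[OF fin]])
qed

lemma sum_delta_mult3: "(\<Sum>k\<in>UNIV. f k * (if k = j then g k else 0)) = f (j::'n::finite) * (g j::real)"
proof -
  have "(\<Sum>k\<in>UNIV. f k * (if k = j then g k else 0)) = (\<Sum>k\<in>UNIV. if k = j then f k * g k else 0)"
    by (intro sum.cong) auto
  also have "\<dots> = f j * g j" by simp
  finally show ?thesis .
qed

theorem lemma3p1:
  fixes D :: "(real^'d) set" and \<alpha> :: "real^'d" and \<epsilon> :: real
  assumes "CARD('d) \<ge> 2"
    and "bounded D" and "convex D"
    and "\<epsilon> > 0" and "{x. \<forall>i. 0 \<le> x $ i \<and> x $ i < \<epsilon>} \<subseteq> D"
    and "liminf (\<lambda>n::nat. ereal (real n * (\<Prod>i\<in>UNIV. dZ (real n * \<alpha> $ i)))) > 0"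
  shows "\<exists>\<Theta>::real. \<forall>t::'d \<Rightarrow> real. (\<forall>i. t i \<ge> 1) \<longrightarrow>
           (\<forall>k \<in> (\<lambda>x. x v* diagm t) ` D. (\<forall>i. k $ i \<in> \<int>) \<longrightarrow>
              F D (block (mat 1) \<alpha> 0 1 ** block (matrix_inv (diagm t)) 0 0 (det (diagm t)))
                  (k v* matrix_inv (diagm t)) \<le> ereal \<Theta>)"
proof -
  obtain c0 where c0: "c0 > 0"
    and badU: "\<forall>q::int. q \<noteq> 0 \<longrightarrow> c0 \<le> \<bar>real_of_int q\<bar> * (\<Prod>i\<in>UNIV. dZ (of_int q * \<alpha> $ i))"
    using badness[OF assms(6)] by auto
  have badJ: "c0 \<le> \<bar>of_int q\<bar> * (\<Prod>i\<in>J. dZ (of_int q * \<alpha> $ i))" if "q \<noteq> 0" for J and q :: int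
  proof -
    have "(\<Prod>i\<in>UNIV. dZ (of_int q * \<alpha> $ i)) \<le> (\<Prod>i\<in>J. dZ (of_int q * \<alpha> $ i))"
    proof (rule prod_sub_ge)
      fix i show "0 \<le> dZ (of_int q * \<alpha> $ i)" by (rule dZ_nonneg)
      show "dZ (of_int q * \<alpha> $ i) \<le> 1" using dZ_half[of "of_int q * \<alpha> $ i"] by linarith
    qed
    hence "\<bar>real_of_int q\<bar> * (\<Prod>i\<in>UNIV. dZ (of_int q * \<alpha> $ i)) \<le> \<bar>of_int q\<bar> * (\<Prod>i\<in>J. dZ (of_int q * \<alpha> $ i))"
      by (intro mult_left_mono) auto
    moreover have "c0 \<le> \<bar>real_of_int q\<bar> * (\<Prod>i\<in>UNIV. dZ (of_int q * \<alpha> $ i))" using badU that by blast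
    ultimately show ?thesis by linarith
  qed
  define Pc where "Pc J Rc \<longleftrightarrow> (\<forall>N. (\<forall>i\<in>J. N i \<ge> 1) \<longrightarrow> (\<forall>u. (\<forall>i. i \<notin> J \<longrightarrow> u $ Some i = 0) \<longrightarrow>
            (\<exists>v. intg v \<and> (\<forall>l. \<bar>zpt \<alpha> J N v $ l - u $ l\<bar> \<le> Rc))))" for J Rc
  have "\<forall>J. \<exists>Rc. Rc \<ge> 0 \<and> Pc J Rc"
  proof
    fix J :: "'d set"
    show "\<exists>Rc. Rc \<ge> 0 \<and> Pc J Rc" unfolding Pc_def using cov[OF c0 badJ, of J] by blast
  qed
  hence "\<exists>RcF. \<forall>J. RcF J \<ge> 0 \<and> Pc J (RcF J)" by (rule choice)
  then obtain RcF where RcF: "\<And>J. RcF J \<ge> 0 \<and> Pc J (RcF J)" by blast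
  define Rm where "Rm = Max (range RcF)"
  have RcF_le: "RcF J \<le> Rm" for J unfolding Rm_def by (intro Max_ge) auto
  have Rm0: "Rm \<ge> 0" using RcF_le[of "{}"] RcF[of "{}"] by linarith
  define L where "L = 2 * Rm + 2"
  have L0: "L > 0" unfolding L_def using Rm0 by simp
  define mx where "mx = max 1 (L / \<epsilon>)"
  define \<Theta> where "\<Theta> = L * mx ^ CARD('d)"
  show ?thesis
  proof (intro exI[of _ \<Theta>] allI impI ballI)
    fix t :: "'d \<Rightarrow> real" and k :: "real^'d"
    assume t1: "\<forall>i. 1 \<le> t i" and k: "k \<in> (\<lambda>x. x v* diagm t) ` D" and kint: "\<forall>i. k $ i \<in> \<int>"
    show "F D (block (mat 1) \<alpha> 0 1 ** block (matrix_inv (diagm t)) 0 0 (det (diagm t)))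
                  (k v* matrix_inv (diagm t)) \<le> ereal \<Theta>"
    proof -
    have tpos: "t i > 0" for i using t1 by (meson less_le_trans zero_less_one)
    have tne: "t i \<noteq> 0" for i using tpos[of i] by simp
    define M where "M = block (mat 1) \<alpha> 0 1 ** block (matrix_inv (diagm t)) 0 0 (det (diagm t))"
    define p where "p = k v* matrix_inv (diagm t)"
    define PT where "PT = (\<Prod>i\<in>UNIV. t i)"
    have PT0: "PT > 0" unfolding PT_def using tpos by (simp add: prod_pos)
    have Mx: "(V v* M) $ Some j = V $ Some j / t j" for V j unfolding M_def by (rule Mrow(1)[OF tne])
    have My: "(V v* M) $ None = ((\<Sum>i\<in>UNIV. V $ Some i * \<alpha> $ i) + V $ None) * PT" for V
      unfolding M_def PT_def by (rule Mrow(2)[OF tne])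
    have pc: "p $ i = k $ i / t i" for i
      unfolding p_def matrix_inv_diagm[OF tne] vector_matrix_mult_def
      by (simp add: sum_delta_mult3)
    define J where "J = {i. \<epsilon> * t i \<ge> L}"
    define N where "N i = \<epsilon> * t i / L" for i
    have N1: "N i \<ge> 1" if "i \<in> J" for i using that L0 unfolding J_def N_def by simp
    have Npos: "N i > 0" for i unfolding N_def using assms(4) tpos[of i] L0 by simp
    define PN where "PN = prod N J"
    have PN0: "PN > 0" unfolding PN_def using Npos by (simp add: prod_pos)
    define \<beta> where "\<beta> = (\<Sum>i\<in>UNIV. k $ i * \<alpha> $ i)"
    define u :: "real^'d option" where
      "u = (\<chi> l. case l of Some i \<Rightarrow> (if i \<in> J then L/2 else 0) | None \<Rightarrow> \<beta> * PN + L/2)"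
    have uJ: "\<forall>i. i \<notin> J \<longrightarrow> u $ Some i = 0" unfolding u_def by simp
    obtain v where v: "intg v" and vc: "\<forall>l. \<bar>zpt \<alpha> J N v $ l - u $ l\<bar> \<le> RcF J"
      using RcF[of J] uJ N1 unfolding Pc_def by blast
    have close: "\<bar>zpt \<alpha> J N v $ l - u $ l\<bar> < L / 2" for l
    proof -
      have "\<bar>zpt \<alpha> J N v $ l - u $ l\<bar> \<le> RcF J" using vc by blast
      moreover have "L / 2 = Rm + 1" unfolding L_def by simp
      ultimately show ?thesis using RcF_le[of J] by linarith
    qed
    define kk :: "real^'d" where "kk = (\<chi> i. if i \<in> J then v $ Some i else 0)"
    define m where "m = kk - k"
    define V :: "real^'d option" where "V = (\<chi> l. case l of Some i \<Rightarrow> m $ i | None \<Rightarrow> v $ None)"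
    define e where "e = (\<Sum>i\<in>UNIV. m $ i * \<alpha> $ i) + v $ None"
    define y where "y = e * PT"
    have Vint: "\<forall>l. V $ l \<in> \<int>"
    proof
      fix l show "V $ l \<in> \<int>"
        using v kint unfolding V_def m_def kk_def intg_def by (cases l) auto
    qed
    have wlat: "V v* M \<in> row_lattice M" unfolding row_lattice_def using Vint by blast
    have ypw: "ypart (V v* M) = y" unfolding ypart_def My y_def e_def V_def by simp
    have xpw: "xpart (V v* M) + p = (\<chi> i. kk $ i / t i)"
      unfolding xpart_def by (simp add: vec_eq_iff Mx pc V_def m_def diff_divide_distrib)
    have kkD: "(\<chi> i. kk $ i / t i) \<in> D"
    proof (rule subsetD[OF assms(5)], safe)
      fix i
      show "0 \<le> (\<chi> i. kk $ i / t i) $ i" "(\<chi> i. kk $ i / t i) $ i < \<epsilon>"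
      proof -
        have "0 \<le> kk $ i / t i \<and> kk $ i / t i < \<epsilon>"
        proof (cases "i \<in> J")
          case False thus ?thesis unfolding kk_def using assms(4) by simp
        next
          case True
          have "\<bar>v $ Some i / N i - L / 2\<bar> < L / 2" using close[of "Some i"] True unfolding u_def by simp
          hence "v $ Some i / N i - L / 2 < L / 2 \<and> - (v $ Some i / N i - L / 2) < L / 2"
            by (simp only: abs_less_iff)
          hence a: "0 < v $ Some i / N i" "v $ Some i / N i < L" by linarith+
          have eq: "kk $ i / t i = (v $ Some i / N i) * (\<epsilon> / L)"
            unfolding kk_def N_def using True tne[of i] L0 assms(4) by (simp add: field_simps)
          have "(v $ Some i / N i) * (\<epsilon> / L) < L * (\<epsilon> / L)"
            using a assms(4) L0 by (intro mult_strict_right_mono) auto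
          hence "(v $ Some i / N i) * (\<epsilon> / L) < \<epsilon>" using L0 by simp
          moreover have "0 \<le> (v $ Some i / N i) * (\<epsilon> / L)" using a assms(4) L0
            by (intro mult_nonneg_nonneg) auto
          ultimately show ?thesis unfolding eq by simp
        qed
        thus "0 \<le> (\<chi> i. kk $ i / t i) $ i" "(\<chi> i. kk $ i / t i) $ i < \<epsilon>" by auto
      qed
    qed
    have esum: "(\<Sum>i\<in>UNIV. m $ i * \<alpha> $ i) = (\<Sum>i\<in>J. v $ Some i * \<alpha> $ i) - \<beta>"
    proof -
      have "(\<Sum>i\<in>UNIV. kk $ i * \<alpha> $ i) = (\<Sum>i\<in>J. v $ Some i * \<alpha> $ i)"
      proof -
        have "(\<Sum>i\<in>UNIV. kk $ i * \<alpha> $ i) = (\<Sum>i\<in>UNIV. if i \<in> J then v $ Some i * \<alpha> $ i else 0)"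
          unfolding kk_def by (intro sum.cong) auto
        also have "\<dots> = (\<Sum>i\<in>UNIV \<inter> J. v $ Some i * \<alpha> $ i)" by (rule sum.inter_restrict[symmetric]) simp
        finally show ?thesis by simp
      qed
      thus ?thesis unfolding m_def \<beta>_def by (simp add: left_diff_distrib sum_subtractf)
    qed
    have eb: "0 < e * PN \<and> e * PN < L"
    proof -
      have "\<bar>((\<Sum>i\<in>J. v $ Some i * \<alpha> $ i) + v $ None) * PN - (\<beta> * PN + L / 2)\<bar> < L / 2"
        using close[of None] unfolding u_def PN_def by simp
      moreover have "((\<Sum>i\<in>J. v $ Some i * \<alpha> $ i) + v $ None) * PN - \<beta> * PN = e * PN"
        unfolding e_def esum by (simp add: algebra_simps)
      ultimately show ?thesis unfolding abs_less_iff by linarith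
    qed
    have e0: "e > 0" using eb PN0 by (simp add: zero_less_mult_iff)
    have y0: "y > 0" unfolding y_def using e0 PT0 by simp
    have mx1: "mx \<ge> 1" unfolding mx_def by simp
    have PTb: "PT \<le> mx ^ CARD('d) * PN"
    proof -
      have "PT \<le> (\<Prod>i\<in>UNIV. mx * (if i \<in> J then N i else 1))" unfolding PT_def
      proof (rule prod_mono, safe)
        fix i
        show "0 \<le> t i" using tpos[of i] by simp
        show "t i \<le> mx * (if i \<in> J then N i else 1)"
        proof (cases "i \<in> J")
          case True
          have "t i = (L / \<epsilon>) * N i" unfolding N_def using assms(4) L0 by simp
          also have "\<dots> \<le> mx * N i" unfolding mx_def using Npos[of i] by (intro mult_right_mono) auto
          finally show ?thesis using True by simp
        next
          case False
          hence "\<epsilon> * t i < L" unfolding J_def by simp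
          hence "t i < L / \<epsilon>" using assms(4) by (simp add: field_simps)
          thus ?thesis using False unfolding mx_def by simp
        qed
      qed
      also have "\<dots> = mx ^ CARD('d) * (\<Prod>i\<in>UNIV. if i \<in> J then N i else 1)"
        by (simp add: prod.distrib)
      also have "(\<Prod>i\<in>UNIV. if i \<in> J then N i else 1) = PN"
      proof -
        have "(\<Prod>i\<in>UNIV. if i \<in> J then N i else 1) = (\<Prod>i\<in>UNIV \<inter> J. N i)"
          by (rule prod.inter_restrict[symmetric]) simp
        thus ?thesis unfolding PN_def by simp
      qed
      finally show ?thesis .
    qed
    have yT: "y \<le> \<Theta>"
    proof -
      have "y = e * PT" by (simp add: y_def)
      also have "\<dots> \<le> e * (mx ^ CARD('d) * PN)" using PTb e0 by (intro mult_left_mono) auto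
      also have "\<dots> = (e * PN) * mx ^ CARD('d)" by simp
      also have "\<dots> \<le> L * mx ^ CARD('d)" using eb mx1 by (intro mult_right_mono) auto
      finally show ?thesis unfolding \<Theta>_def .
    qed
    have yF: "y \<in> Fset D M p"
      unfolding Fset_def using wlat ypw xpw kkD y0 by (intro CollectI exI[of _ "V v* M"]) auto
    obtain Bd where Bd: "\<forall>x\<in>D. norm x \<le> Bd" using assms(2) unfolding bounded_iff by blast
    define C1 where "C1 = (\<Sum>i\<in>UNIV. t i * (\<bar>Bd\<bar> + \<bar>p $ i\<bar>))"
    define C where "C = C1 + \<Theta> / PT + C1 * (\<Sum>i\<in>UNIV. \<bar>\<alpha> $ i\<bar>)"
    define W where "W = {V :: real^'d option. (\<forall>l. V $ l \<in> \<int>) \<and> (\<forall>l. \<bar>V $ l\<bar> \<le> C)}"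
    have finW: "finite W" unfolding W_def by (rule finite_int_box)
    have Fsub: "Fset D M p \<inter> {..\<Theta>} \<subseteq> (\<lambda>V. ypart (V v* M)) ` W"
    proof
      fix z assume z: "z \<in> Fset D M p \<inter> {..\<Theta>}"
      then obtain w where w: "z = ypart w" "w \<in> row_lattice M" "ypart w > 0" "xpart w + p \<in> D"
        unfolding Fset_def by auto
      obtain V' where V': "w = V' v* M" "\<forall>i. V' $ i \<in> \<int>" using w(2) unfolding row_lattice_def by auto
      have C1i: "\<bar>V' $ Some i\<bar> \<le> C1" for i
      proof -
        have "\<bar>(xpart w + p) $ i\<bar> \<le> Bd" using Bd w(4) component_le_norm_cart order.trans by blast
        hence "\<bar>V' $ Some i / t i + p $ i\<bar> \<le> Bd" unfolding xpart_def V'(1) Mx by simp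
        hence "\<bar>V' $ Some i / t i\<bar> \<le> \<bar>Bd\<bar> + \<bar>p $ i\<bar>" by linarith
        hence "\<bar>V' $ Some i\<bar> \<le> t i * (\<bar>Bd\<bar> + \<bar>p $ i\<bar>)" using tpos[of i]
          by (simp add: abs_divide pos_divide_le_eq mult.commute)
        also have "\<dots> \<le> C1" unfolding C1_def
        proof (rule member_le_sum)
          fix x show "0 \<le> t x * (\<bar>Bd\<bar> + \<bar>p $ x\<bar>)" using tpos[of x] by simp
        qed auto
        finally show ?thesis .
      qed
      have C10: "0 \<le> C1" using C1i[of undefined] by linarith
      have yb: "((\<Sum>i\<in>UNIV. V' $ Some i * \<alpha> $ i) + V' $ None) * PT \<le> \<Theta>"
        using z w(1) unfolding V'(1) ypart_def My by simp
      have "((\<Sum>i\<in>UNIV. V' $ Some i * \<alpha> $ i) + V' $ None) * PT > 0"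
        using w(3) w(1) unfolding V'(1) ypart_def My by simp
      hence ypos: "(\<Sum>i\<in>UNIV. V' $ Some i * \<alpha> $ i) + V' $ None > 0" using PT0 by (simp add: zero_less_mult_iff)
      have ylt: "(\<Sum>i\<in>UNIV. V' $ Some i * \<alpha> $ i) + V' $ None \<le> \<Theta> / PT" using yb PT0
        by (simp add: pos_le_divide_eq)
      have sb: "\<bar>\<Sum>i\<in>UNIV. V' $ Some i * \<alpha> $ i\<bar> \<le> C1 * (\<Sum>i\<in>UNIV. \<bar>\<alpha> $ i\<bar>)"
      proof -
        have "\<bar>\<Sum>i\<in>UNIV. V' $ Some i * \<alpha> $ i\<bar> \<le> (\<Sum>i\<in>UNIV. C1 * \<bar>\<alpha> $ i\<bar>)"
        proof (rule order.trans[OF sum_abs sum_mono])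
          fix i show "\<bar>V' $ Some i * \<alpha> $ i\<bar> \<le> C1 * \<bar>\<alpha> $ i\<bar>" unfolding abs_mult
            using C1i[of i] by (intro mult_right_mono) auto
        qed
        thus ?thesis by (simp add: sum_distrib_left)
      qed
      have TP0: "\<Theta> / PT \<ge> 0"
      proof -
        have "\<Theta> \<ge> 0" unfolding \<Theta>_def using L0 mx1 by simp
        thus ?thesis using PT0 by simp
      qed
      have sa0: "0 \<le> C1 * (\<Sum>i\<in>UNIV. \<bar>\<alpha> $ i\<bar>)" using C10 by (simp add: sum_nonneg)
      have "\<bar>V' $ None\<bar> \<le> \<Theta> / PT + C1 * (\<Sum>i\<in>UNIV. \<bar>\<alpha> $ i\<bar>)"
        using ypos ylt sb unfolding abs_le_iff by linarith
      hence VN: "\<bar>V' $ None\<bar> \<le> C" unfolding C_def using C10 by linarith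
      have "\<forall>l. \<bar>V' $ l\<bar> \<le> C"
      proof
        fix l show "\<bar>V' $ l\<bar> \<le> C"
        proof (cases l)
          case None thus ?thesis using VN by simp
        next
          case (Some i)
          have "\<bar>V' $ Some i\<bar> \<le> C" using C1i[of i] TP0 sa0 unfolding C_def by linarith
          thus ?thesis using Some by simp
        qed
      qed
      hence "V' \<in> W" unfolding W_def using V'(2) by simp
      thus "z \<in> (\<lambda>V. ypart (V v* M)) ` W" using w(1) V'(1) by blast
    qed
    have finF: "finite (Fset D M p \<inter> {..\<Theta>})" by (rule finite_subset[OF Fsub finite_imageI[OF finW]])
    have neF: "Fset D M p \<inter> {..\<Theta>} \<noteq> {}" using yF yT by auto
    define m0 where "m0 = Min (Fset D M p \<inter> {..\<Theta>})"
    have m0in: "m0 \<in> Fset D M p" "m0 \<le> \<Theta>" using Min_in[OF finF neF] unfolding m0_def by auto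
    have m0le: "m0 \<le> z" if "z \<in> Fset D M p" for z
    proof (cases "z \<le> \<Theta>")
      case True thus ?thesis unfolding m0_def using that finF by (intro Min_le) auto
    next
      case False thus ?thesis using m0in(2) by simp
    qed
    have m0y: "m0 \<le> y" using m0le[OF yF] .
    have ex: "\<exists>y\<in>Fset D M p. \<forall>z\<in>Fset D M p. y \<le> z" using m0in(1) m0le by blast
    have the: "(THE y. y \<in> Fset D M p \<and> (\<forall>z\<in>Fset D M p. y \<le> z)) = m0"
    proof (rule the_equality)
      show "m0 \<in> Fset D M p \<and> (\<forall>z\<in>Fset D M p. m0 \<le> z)" using m0in(1) m0le by blast
      fix y' assume "y' \<in> Fset D M p \<and> (\<forall>z\<in>Fset D M p. y' \<le> z)"
      thus "y' = m0" using m0in(1) m0le by (meson order.antisym)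
    qed
    have "F D M p = ereal m0" unfolding F_def using ex the by simp
    also have "\<dots> \<le> ereal \<Theta>" using m0y yT by simp
    finally show "F D (block (mat 1) \<alpha> 0 1 ** block (matrix_inv (diagm t)) 0 0 (det (diagm t)))
                  (k v* matrix_inv (diagm t)) \<le> ereal \<Theta>" unfolding M_def p_def .
    qed
  qed
qed

end
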